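(* For a Tychonoff space $X$ the following conditions are equivalent: (1) each compact subset of the free locally convex space $L(X)$ has finite topological dimension; (2) each bounded linearly independent subset of $L(X)$ is finite; (3) each functionally bounded subset of $X$ is finite.
   Context: The free locally convex space $L(X)$ over $X$ is a locally convex space together with a continuous map $\delta:X\to L(X)$ such that for every continuous map $f:X\to E$ into a locally convex space $E$ there is a unique continuous linear $T:L(X)\to E$ with $T\circ\delta=f$; $X$ is identified with a Hamel basis of $L(X)$. A subset $B$ of a topological vector space is bounded if for every neighborhood $U$ of zero there is $n\in\mathbb N$ with $B\subseteq nU$. A subset $B$ of a topological space $X$ is functionally bounded if $f(B)$ is bounded in $\mathbb R$ for every continuous $f:X\to\mathbb R$. *)

theory Defs
  imports "HOL-Analysis.Analysis"
begin

text \<open>Free vector space over the points of X: finitely supported real functions on topspace X.\<close>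
definition fv_space :: "'a topology \<Rightarrow> ('a \<Rightarrow> real) set" where
  "fv_space X = {f. finite {x. f x \<noteq> 0} \<and> {x. f x \<noteq> 0} \<subseteq> topspace X}"

definition fv_delta :: "'a \<Rightarrow> ('a \<Rightarrow> real)" where
  "fv_delta x = (\<lambda>y. if y = x then 1 else 0)"

definition seminorm_on :: "('a \<Rightarrow> real) set \<Rightarrow> (('a \<Rightarrow> real) \<Rightarrow> real) \<Rightarrow> bool" where
  "seminorm_on V p \<longleftrightarrow>
     (\<forall>f\<in>V. 0 \<le> p f) \<and>
     (\<forall>f\<in>V. \<forall>c. p (\<lambda>y. c * f y) = \<bar>c\<bar> * p f) \<and>
     (\<forall>f\<in>V. \<forall>g\<in>V. p (\<lambda>y. f y + g y) \<le> p f + p g)"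

definition admissible_seminorm :: "'a topology \<Rightarrow> (('a \<Rightarrow> real) \<Rightarrow> real) \<Rightarrow> bool" where
  "admissible_seminorm X p \<longleftrightarrow> seminorm_on (fv_space X) p \<and>
     (\<forall>x\<in>topspace X. \<forall>\<epsilon>>0. \<exists>U. openin X U \<and> x \<in> U \<and>
        (\<forall>y\<in>U. p (\<lambda>z. fv_delta y z - fv_delta x z) < \<epsilon>))"

text \<open>The free locally convex space L(X): the free vector space with the finest locally
  convex vector topology making delta continuous, i.e. the topology generated by all
  seminorms p for which delta is p-continuous.\<close>
definition free_lcs :: "'a topology \<Rightarrow> ('a \<Rightarrow> real) topology" where
  "free_lcs X = topology (\<lambda>S. S \<subseteq> fv_space X \<and>
     (\<forall>f\<in>S. \<exists>p \<epsilon>. admissible_seminorm X p \<and> \<epsilon> > 0 \<and>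
        {g \<in> fv_space X. p (\<lambda>y. g y - f y) < \<epsilon>} \<subseteq> S))"

definition tvs_bounded :: "('a \<Rightarrow> real) topology \<Rightarrow> ('a \<Rightarrow> real) set \<Rightarrow> bool" where
  "tvs_bounded L B \<longleftrightarrow> (\<forall>U. openin L U \<and> (\<lambda>y. 0) \<in> U \<longrightarrow>
     (\<exists>n::nat. B \<subseteq> (\<lambda>f. (\<lambda>y. real n * f y)) ` U))"

definition lin_indep :: "('a \<Rightarrow> real) set \<Rightarrow> bool" where
  "lin_indep B \<longleftrightarrow> (\<forall>S c. finite S \<and> S \<subseteq> B \<and> (\<lambda>y. \<Sum>s\<in>S. c s * s y) = (\<lambda>y. 0)
       \<longrightarrow> (\<forall>s\<in>S. c s = 0))"

definition covering_dim_le :: "'b topology \<Rightarrow> nat \<Rightarrow> bool" where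
  "covering_dim_le T n \<longleftrightarrow>
    (\<forall>\<U>. finite \<U> \<and> (\<forall>U\<in>\<U>. openin T U) \<and> \<Union>\<U> = topspace T \<longrightarrow>
      (\<exists>\<V>. finite \<V> \<and> (\<forall>V\<in>\<V>. openin T V) \<and> \<Union>\<V> = topspace T \<and>
           (\<forall>V\<in>\<V>. \<exists>U\<in>\<U>. V \<subseteq> U) \<and>
           (\<forall>x\<in>topspace T. card {V\<in>\<V>. x \<in> V} \<le> n + 1)))"

definition finite_dimensional_space :: "'b topology \<Rightarrow> bool" where
  "finite_dimensional_space T \<longleftrightarrow> (\<exists>n. covering_dim_le T n)"

definition functionally_bounded :: "'a topology \<Rightarrow> 'a set \<Rightarrow> bool" where
  "functionally_bounded X B \<longleftrightarrow> B \<subseteq> topspace X \<and>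
     (\<forall>f. continuous_map X euclideanreal f \<longrightarrow> bounded (f ` B))"

end

theory Submission
  imports Defs "HOL-Library.Function_Algebras"
begin

lemma fv_space_iff: "g \<in> fv_space X \<longleftrightarrow> finite {x. g x \<noteq> 0} \<and> {x. g x \<noteq> 0} \<subseteq> topspace X"
  by (simp add: fv_space_def)

lemma fv_zero[simp]: "(\<lambda>y. 0) \<in> fv_space X"
  by (simp add: fv_space_def)

lemma fv_add: "(\<lambda>y. f y + g y) \<in> fv_space X" if "f \<in> fv_space X" "g \<in> fv_space X"
proof -
  have "{x. f x + g x \<noteq> 0} \<subseteq> {x. f x \<noteq> 0} \<union> {x. g x \<noteq> 0}" by auto
  moreover have "finite ({x. f x \<noteq> 0} \<union> {x. g x \<noteq> 0})" using that by (simp add: fv_space_def)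
  ultimately have "finite {x. f x + g x \<noteq> 0}" by (rule finite_subset)
  moreover have "{x. f x + g x \<noteq> 0} \<subseteq> topspace X" using that \<open>{x. f x + g x \<noteq> 0} \<subseteq> _\<close> by (auto simp: fv_space_def)
  ultimately show ?thesis by (simp add: fv_space_def)
qed

lemma fv_scale: "f \<in> fv_space X \<Longrightarrow> (\<lambda>y. c * f y) \<in> fv_space X"
  unfolding fv_space_def by (auto intro: finite_subset[of _ "{x. f x \<noteq> 0}"])

lemma fv_diff: "f \<in> fv_space X \<Longrightarrow> g \<in> fv_space X \<Longrightarrow> (\<lambda>y. f y - g y) \<in> fv_space X"
  using fv_add[of f X "\<lambda>y. (-1) * g y"] fv_scale[of g X "-1"] by simp

lemma fv_delta_in: "x \<in> topspace X \<Longrightarrow> fv_delta x \<in> fv_space X"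
  unfolding fv_space_def fv_delta_def by auto

lemma fv_sum: "finite J \<Longrightarrow> (\<And>j. j \<in> J \<Longrightarrow> f j \<in> fv_space X) \<Longrightarrow> (\<lambda>y. \<Sum>j\<in>J. f j y) \<in> fv_space X"
proof (induction J rule: finite_induct)
  case empty then show ?case by simp
next
  case (insert a J)
  then show ?case using fv_add[of "f a" X "\<lambda>y. \<Sum>j\<in>J. f j y"] by simp
qed

lemma sn_nonneg: "seminorm_on V p \<Longrightarrow> f \<in> V \<Longrightarrow> 0 \<le> p f"
  by (simp add: seminorm_on_def)

lemma sn_scale: "seminorm_on V p \<Longrightarrow> f \<in> V \<Longrightarrow> p (\<lambda>y. c * f y) = \<bar>c\<bar> * p f"
  by (simp add: seminorm_on_def)

lemma sn_tri: "seminorm_on V p \<Longrightarrow> f \<in> V \<Longrightarrow> g \<in> V \<Longrightarrow> p (\<lambda>y. f y + g y) \<le> p f + p g"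
  by (simp add: seminorm_on_def)

lemma sn_zero: "seminorm_on V p \<Longrightarrow> f \<in> V \<Longrightarrow> p (\<lambda>y. 0) = 0"
  using sn_scale[of V p f 0] by simp

lemma sn_neg: "seminorm_on V p \<Longrightarrow> f \<in> V \<Longrightarrow> p (\<lambda>y. - f y) = p f"
  using sn_scale[of V p f "-1"] by simp

lemma sn_sum:
  assumes "seminorm_on (fv_space X) p" "finite J" "\<And>j. j \<in> J \<Longrightarrow> f j \<in> fv_space X"
  shows "p (\<lambda>y. \<Sum>j\<in>J. f j y) \<le> (\<Sum>j\<in>J. p (f j))"
  using assms(2,3)
proof (induction J rule: finite_induct)
  case empty then show ?case using sn_zero[OF assms(1) fv_zero] by simp
next
  case (insert a J)
  have "p (\<lambda>y. \<Sum>j\<in>insert a J. f j y) = p (\<lambda>y. f a y + (\<Sum>j\<in>J. f j y))"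
    using insert by simp
  also have "\<dots> \<le> p (f a) + p (\<lambda>y. \<Sum>j\<in>J. f j y)"
    using sn_tri[OF assms(1), of "f a" "\<lambda>y. \<Sum>j\<in>J. f j y"] insert fv_sum[of J f X] by auto
  also have "\<dots> \<le> p (f a) + (\<Sum>j\<in>J. p (f j))" using insert by simp
  finally show ?case using insert by simp
qed

lemma sn_lincomb:
  assumes "seminorm_on (fv_space X) p" "finite J" "\<And>j. j \<in> J \<Longrightarrow> f j \<in> fv_space X"
  shows "p (\<lambda>y. \<Sum>j\<in>J. c j * f j y) \<le> (\<Sum>j\<in>J. \<bar>c j\<bar> * p (f j))"
proof -
  have "p (\<lambda>y. \<Sum>j\<in>J. c j * f j y) \<le> (\<Sum>j\<in>J. p (\<lambda>y. c j * f j y))"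
    using sn_sum[OF assms(1,2), of "\<lambda>j y. c j * f j y"] assms(3) fv_scale by blast
  also have "\<dots> = (\<Sum>j\<in>J. \<bar>c j\<bar> * p (f j))"
    using sn_scale[OF assms(1)] assms(3) by simp
  finally show ?thesis .
qed

lemma admissible_add:
  assumes "admissible_seminorm X p" "admissible_seminorm X q"
  shows "admissible_seminorm X (\<lambda>g. p g + q g)"
proof -
  have sp: "seminorm_on (fv_space X) p" and sq: "seminorm_on (fv_space X) q"
    using assms by (auto simp: admissible_seminorm_def)
  have cp: "\<forall>x\<in>topspace X. \<forall>\<epsilon>>0. \<exists>U. openin X U \<and> x \<in> U \<and> (\<forall>y\<in>U. p (\<lambda>z. fv_delta y z - fv_delta x z) < \<epsilon>)"
    using assms(1) unfolding admissible_seminorm_def by blast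
  have cq: "\<forall>x\<in>topspace X. \<forall>\<epsilon>>0. \<exists>U. openin X U \<and> x \<in> U \<and> (\<forall>y\<in>U. q (\<lambda>z. fv_delta y z - fv_delta x z) < \<epsilon>)"
    using assms(2) unfolding admissible_seminorm_def by blast
  have "seminorm_on (fv_space X) (\<lambda>g. p g + q g)"
    unfolding seminorm_on_def
  proof (intro conjI ballI allI)
    fix f assume f: "f \<in> fv_space X"
    show "0 \<le> p f + q f" using sn_nonneg[OF sp f] sn_nonneg[OF sq f] by linarith
  next
    fix f c assume f: "f \<in> fv_space X"
    show "p (\<lambda>y. c * f y) + q (\<lambda>y. c * f y) = \<bar>c\<bar> * (p f + q f)"
      using sn_scale[OF sp f] sn_scale[OF sq f] by (simp add: distrib_left)
  next
    fix f g assume "f \<in> fv_space X" "g \<in> fv_space X"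
    then show "p (\<lambda>y. f y + g y) + q (\<lambda>y. f y + g y) \<le> p f + q f + (p g + q g)"
      using sn_tri[OF sp, of f g] sn_tri[OF sq, of f g] by linarith
  qed
  moreover have "\<exists>U. openin X U \<and> x \<in> U \<and> (\<forall>y\<in>U. p (\<lambda>z. fv_delta y z - fv_delta x z) + q (\<lambda>z. fv_delta y z - fv_delta x z) < e)"
    if x: "x \<in> topspace X" and e: "e > 0" for x e
  proof -
    have e2: "e/2 > 0" using e by simp
    obtain U1 where U1: "openin X U1" "x \<in> U1" "\<forall>y\<in>U1. p (\<lambda>z. fv_delta y z - fv_delta x z) < e/2"
      using cp x e2 by blast
    obtain U2 where U2: "openin X U2" "x \<in> U2" "\<forall>y\<in>U2. q (\<lambda>z. fv_delta y z - fv_delta x z) < e/2"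
      using cq x e2 by blast
    have "\<forall>y\<in>U1 \<inter> U2. p (\<lambda>z. fv_delta y z - fv_delta x z) + q (\<lambda>z. fv_delta y z - fv_delta x z) < e"
    proof
      fix y assume "y \<in> U1 \<inter> U2"
      then have "p (\<lambda>z. fv_delta y z - fv_delta x z) < e/2" "q (\<lambda>z. fv_delta y z - fv_delta x z) < e/2"
        using U1(3) U2(3) by auto
      then show "p (\<lambda>z. fv_delta y z - fv_delta x z) + q (\<lambda>z. fv_delta y z - fv_delta x z) < e" by linarith
    qed
    moreover have "openin X (U1 \<inter> U2)" using U1(1) U2(1) by blast
    ultimately show ?thesis using U1(2) U2(2) by blast
  qed
  ultimately show ?thesis unfolding admissible_seminorm_def by blast
qed

lemma admissible_zero: "admissible_seminorm X (\<lambda>g. 0)"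
  unfolding admissible_seminorm_def seminorm_on_def by auto

lemma admissible_sn: "admissible_seminorm X p \<Longrightarrow> seminorm_on (fv_space X) p"
  by (simp add: admissible_seminorm_def)

lemma istopology_free:
  "istopology (\<lambda>S. S \<subseteq> fv_space X \<and>
     (\<forall>f\<in>S. \<exists>p \<epsilon>. admissible_seminorm X p \<and> \<epsilon> > 0 \<and>
        {g \<in> fv_space X. p (\<lambda>y. g y - f y) < \<epsilon>} \<subseteq> S))"
  unfolding istopology_def
proof (rule conjI; intro allI impI)
  fix S T
  assume S: "S \<subseteq> fv_space X \<and> (\<forall>f\<in>S. \<exists>p \<epsilon>. admissible_seminorm X p \<and> \<epsilon> > 0 \<and>
        {g \<in> fv_space X. p (\<lambda>y. g y - f y) < \<epsilon>} \<subseteq> S)"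
    and T: "T \<subseteq> fv_space X \<and> (\<forall>f\<in>T. \<exists>p \<epsilon>. admissible_seminorm X p \<and> \<epsilon> > 0 \<and>
        {g \<in> fv_space X. p (\<lambda>y. g y - f y) < \<epsilon>} \<subseteq> T)"
  show "S \<inter> T \<subseteq> fv_space X \<and> (\<forall>f\<in>S \<inter> T. \<exists>p \<epsilon>. admissible_seminorm X p \<and> \<epsilon> > 0 \<and>
        {g \<in> fv_space X. p (\<lambda>y. g y - f y) < \<epsilon>} \<subseteq> S \<inter> T)"
  proof (intro conjI ballI)
    show "S \<inter> T \<subseteq> fv_space X" using S by auto
    fix f assume f: "f \<in> S \<inter> T"
    obtain p e1 where p: "admissible_seminorm X p" "e1 > 0" "{g \<in> fv_space X. p (\<lambda>y. g y - f y) < e1} \<subseteq> S"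
      using S f by blast
    obtain q e2 where q: "admissible_seminorm X q" "e2 > 0" "{g \<in> fv_space X. q (\<lambda>y. g y - f y) < e2} \<subseteq> T"
      using T f by blast
    have fV: "f \<in> fv_space X" using f S by auto
    have sub: "{g \<in> fv_space X. p (\<lambda>y. g y - f y) + q (\<lambda>y. g y - f y) < min e1 e2} \<subseteq> S \<inter> T"
    proof
      fix g assume g: "g \<in> {g \<in> fv_space X. p (\<lambda>y. g y - f y) + q (\<lambda>y. g y - f y) < min e1 e2}"
      then have gV: "(\<lambda>y. g y - f y) \<in> fv_space X" using fV fv_diff by blast
      have "0 \<le> p (\<lambda>y. g y - f y)" "0 \<le> q (\<lambda>y. g y - f y)"
        using sn_nonneg[OF admissible_sn[OF p(1)] gV] sn_nonneg[OF admissible_sn[OF q(1)] gV] .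
      moreover have gg: "g \<in> fv_space X" "p (\<lambda>y. g y - f y) + q (\<lambda>y. g y - f y) < min e1 e2" using g by auto
      ultimately have "p (\<lambda>y. g y - f y) < e1" "q (\<lambda>y. g y - f y) < e2" by linarith+
      then show "g \<in> S \<inter> T" using gg(1) p(3) q(3) by blast
    qed
    have adm: "admissible_seminorm X (\<lambda>g. p g + q g)" using admissible_add[OF p(1) q(1)] .
    have mp: "min e1 e2 > 0" using p(2) q(2) by simp
    show "\<exists>p \<epsilon>. admissible_seminorm X p \<and> \<epsilon> > 0 \<and>
        {g \<in> fv_space X. p (\<lambda>y. g y - f y) < \<epsilon>} \<subseteq> S \<inter> T"
      by (rule exI[of _ "\<lambda>g. p g + q g"], rule exI[of _ "min e1 e2"]) (use adm mp sub in blast)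
  qed
next
  fix K :: "('a \<Rightarrow> real) set set"
  assume H: "\<forall>S\<in>K. S \<subseteq> fv_space X \<and> (\<forall>f\<in>S. \<exists>p \<epsilon>. admissible_seminorm X p \<and> \<epsilon> > 0 \<and>
        {g \<in> fv_space X. p (\<lambda>y. g y - f y) < \<epsilon>} \<subseteq> S)"
  then show "\<Union>K \<subseteq> fv_space X \<and> (\<forall>f\<in>\<Union>K. \<exists>p \<epsilon>. admissible_seminorm X p \<and> \<epsilon> > 0 \<and>
        {g \<in> fv_space X. p (\<lambda>y. g y - f y) < \<epsilon>} \<subseteq> \<Union>K)"
  proof (intro conjI ballI)
    show "\<Union>K \<subseteq> fv_space X" using H by blast
    fix f assume "f \<in> \<Union>K"
    then obtain S where S: "S \<in> K" "f \<in> S" by blast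
    then obtain p e where "admissible_seminorm X p" "e > 0" "{g \<in> fv_space X. p (\<lambda>y. g y - f y) < e} \<subseteq> S"
      using H by blast
    then show "\<exists>p \<epsilon>. admissible_seminorm X p \<and> \<epsilon> > 0 \<and>
        {g \<in> fv_space X. p (\<lambda>y. g y - f y) < \<epsilon>} \<subseteq> \<Union>K" using S(1) by blast
  qed
qed

lemma openin_free:
  "openin (free_lcs X) S \<longleftrightarrow> S \<subseteq> fv_space X \<and>
     (\<forall>f\<in>S. \<exists>p \<epsilon>. admissible_seminorm X p \<and> \<epsilon> > 0 \<and>
        {g \<in> fv_space X. p (\<lambda>y. g y - f y) < \<epsilon>} \<subseteq> S)"
  unfolding free_lcs_def using istopology_free[of X] by (simp add: topology_inverse')

lemma topspace_free[simp]: "topspace (free_lcs X) = fv_space X"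
proof -
  have "openin (free_lcs X) (fv_space X)"
    unfolding openin_free using admissible_zero by (intro conjI ballI exI[of _ "\<lambda>g. 0"] exI[of _ 1]) auto
  then show ?thesis unfolding topspace_def using openin_free by blast
qed

lemma ball_open:
  assumes p: "admissible_seminorm X p" and f: "f \<in> fv_space X"
  shows "openin (free_lcs X) {g \<in> fv_space X. p (\<lambda>y. g y - f y) < e}"
  unfolding openin_free
proof (intro conjI ballI)
  fix g assume g: "g \<in> {g \<in> fv_space X. p (\<lambda>y. g y - f y) < e}"
  have sp: "seminorm_on (fv_space X) p" using p admissible_sn by blast
  show "\<exists>p' \<epsilon>. admissible_seminorm X p' \<and> \<epsilon> > 0 \<and>
        {h \<in> fv_space X. p' (\<lambda>y. h y - g y) < \<epsilon>} \<subseteq> {g \<in> fv_space X. p (\<lambda>y. g y - f y) < e}"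
  proof (intro exI conjI)
    show "e - p (\<lambda>y. g y - f y) > 0" using g by auto
    show "{h \<in> fv_space X. p (\<lambda>y. h y - g y) < e - p (\<lambda>y. g y - f y)} \<subseteq> {g \<in> fv_space X. p (\<lambda>y. g y - f y) < e}"
    proof
      fix h assume h: "h \<in> {h \<in> fv_space X. p (\<lambda>y. h y - g y) < e - p (\<lambda>y. g y - f y)}"
      have "p (\<lambda>y. h y - f y) = p (\<lambda>y. (h y - g y) + (g y - f y))" by simp
      also have "\<dots> \<le> p (\<lambda>y. h y - g y) + p (\<lambda>y. g y - f y)"
        using sn_tri[OF sp, of "\<lambda>y. h y - g y" "\<lambda>y. g y - f y"] h g f fv_diff by blast
      finally show "h \<in> {g \<in> fv_space X. p (\<lambda>y. g y - f y) < e}" using h by auto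
    qed
  qed (rule p)
qed auto

lemma cont_real_iff:
  "continuous_map X euclideanreal f \<longleftrightarrow>
   (\<forall>x\<in>topspace X. \<forall>\<epsilon>>0. \<exists>U. openin X U \<and> x \<in> U \<and> (\<forall>y\<in>U. \<bar>f y - f x\<bar> < \<epsilon>))"
  using Met_TC.continuous_map_to_metric[of X f] by (simp add: dist_real_def abs_minus_commute)

definition pair :: "('a \<Rightarrow> real) \<Rightarrow> ('a \<Rightarrow> real) \<Rightarrow> real" where
  "pair g \<phi> = (\<Sum>x\<in>{x. g x \<noteq> 0}. g x * \<phi> x)"

lemma pair_superset:
  assumes "finite T" "{x. g x \<noteq> 0} \<subseteq> T"
  shows "pair g \<phi> = (\<Sum>x\<in>T. g x * \<phi> x)"
  unfolding pair_def by (rule sum.mono_neutral_left) (use assms in auto)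

lemma pair_add:
  assumes "g \<in> fv_space X" "h \<in> fv_space X"
  shows "pair (\<lambda>y. g y + h y) \<phi> = pair g \<phi> + pair h \<phi>"
proof -
  let ?T = "{x. g x \<noteq> 0} \<union> {x. h x \<noteq> 0}"
  have fT: "finite ?T" using assms by (simp add: fv_space_def)
  have "pair (\<lambda>y. g y + h y) \<phi> = (\<Sum>x\<in>?T. (g x + h x) * \<phi> x)"
    by (rule pair_superset[OF fT]) auto
  also have "\<dots> = (\<Sum>x\<in>?T. g x * \<phi> x) + (\<Sum>x\<in>?T. h x * \<phi> x)"
    by (simp add: distrib_right sum.distrib)
  also have "\<dots> = pair g \<phi> + pair h \<phi>"
    using pair_superset[OF fT, of g \<phi>] pair_superset[OF fT, of h \<phi>] by auto
  finally show ?thesis .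
qed

lemma pair_scale: "pair (\<lambda>y. c * g y) \<phi> = c * pair g \<phi>"
proof (cases "c = 0")
  case True then show ?thesis by (simp add: pair_def)
next
  case False
  then have "{x. c * g x \<noteq> 0} = {x. g x \<noteq> 0}" by auto
  then show ?thesis by (simp add: pair_def sum_distrib_left mult.assoc)
qed

lemma pair_diff:
  assumes "g \<in> fv_space X" "h \<in> fv_space X"
  shows "pair (\<lambda>y. g y - h y) \<phi> = pair g \<phi> - pair h \<phi>"
  using pair_add[OF assms(1) fv_scale[OF assms(2), of "-1"], of \<phi>] pair_scale[of "-1" h \<phi>] by simp

lemma pair_delta: "pair (fv_delta x) \<phi> = \<phi> x"
  using pair_superset[of "{x}" "fv_delta x" \<phi>] by (auto simp: fv_delta_def)

lemma pair_delta_diff: "pair (\<lambda>z. fv_delta y z - fv_delta x z) \<phi> = \<phi> y - \<phi> x"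
proof -
  have "pair (\<lambda>z. fv_delta y z - fv_delta x z) \<phi> = (\<Sum>z\<in>{x,y}. (fv_delta y z - fv_delta x z) * \<phi> z)"
    by (rule pair_superset) (auto simp: fv_delta_def)
  then show ?thesis by (cases "x = y") (auto simp: fv_delta_def)
qed

lemma pair_zero_fun: "(\<And>x. g x \<noteq> 0 \<Longrightarrow> \<phi> x = 0) \<Longrightarrow> pair g \<phi> = 0"
  unfolding pair_def by (rule sum.neutral) auto

lemma pair_sum:
  assumes "finite J" "\<And>j. j \<in> J \<Longrightarrow> f j \<in> fv_space X"
  shows "pair (\<lambda>y. \<Sum>j\<in>J. f j y) \<phi> = (\<Sum>j\<in>J. pair (f j) \<phi>)"
  using assms
proof (induction J rule: finite_induct)
  case empty then show ?case by (simp add: pair_def)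
next
  case (insert a J)
  have "pair (\<lambda>y. \<Sum>j\<in>insert a J. f j y) \<phi> = pair (\<lambda>y. f a y + (\<Sum>j\<in>J. f j y)) \<phi>"
    using insert by simp
  also have "\<dots> = pair (f a) \<phi> + pair (\<lambda>y. \<Sum>j\<in>J. f j y) \<phi>"
    by (rule pair_add[of _ X]) (use insert fv_sum[of J f X] in auto)
  finally show ?case using insert by simp
qed

lemma admissible_pair:
  assumes "continuous_map X euclideanreal \<phi>"
  shows "admissible_seminorm X (\<lambda>g. \<bar>pair g \<phi>\<bar>)"
  unfolding admissible_seminorm_def
proof (intro conjI)
  show "seminorm_on (fv_space X) (\<lambda>g. \<bar>pair g \<phi>\<bar>)"
    unfolding seminorm_on_def
  proof (intro conjI ballI allI)
    fix f c show "\<bar>pair (\<lambda>y. c * f y) \<phi>\<bar> = \<bar>c\<bar> * \<bar>pair f \<phi>\<bar>"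
      by (simp only: pair_scale abs_mult)
  next
    fix f g assume "f \<in> fv_space X" "g \<in> fv_space X"
    then show "\<bar>pair (\<lambda>y. f y + g y) \<phi>\<bar> \<le> \<bar>pair f \<phi>\<bar> + \<bar>pair g \<phi>\<bar>"
      by (simp only: pair_add abs_triangle_ineq)
  qed simp
  show "\<forall>x\<in>topspace X. \<forall>\<epsilon>>0. \<exists>U. openin X U \<and> x \<in> U \<and> (\<forall>y\<in>U. \<bar>pair (\<lambda>z. fv_delta y z - fv_delta x z) \<phi>\<bar> < \<epsilon>)"
    using assms unfolding cont_real_iff pair_delta_diff by blast
qed

lemma admissible_sum_pair:
  assumes "finite I" "\<And>i. i \<in> I \<Longrightarrow> continuous_map X euclideanreal (\<phi> i)"
  shows "admissible_seminorm X (\<lambda>g. \<Sum>i\<in>I. \<bar>pair g (\<phi> i)\<bar>)"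
  using assms
proof (induction I rule: finite_induct)
  case empty then show ?case using admissible_zero by simp
next
  case (insert a I)
  then show ?case
    using admissible_add[OF admissible_pair[of X "\<phi> a"] insert.IH] by simp
qed

lemma adm_delta_cont:
  assumes "admissible_seminorm X p"
  shows "continuous_map X euclideanreal (\<lambda>x. p (fv_delta x))"
  unfolding cont_real_iff
proof (intro ballI allI impI)
  fix x e assume x: "x \<in> topspace X" and e: "(e::real) > 0"
  have sp: "seminorm_on (fv_space X) p" using assms admissible_sn by blast
  obtain U where U: "openin X U" "x \<in> U" "\<forall>y\<in>U. p (\<lambda>z. fv_delta y z - fv_delta x z) < e"
    using assms x e unfolding admissible_seminorm_def by blast
  have "\<bar>p (fv_delta y) - p (fv_delta x)\<bar> < e" if y: "y \<in> U" for y
  proof -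
    have yt: "y \<in> topspace X" using U(1) y openin_subset by blast
    have d1: "fv_delta y \<in> fv_space X" "fv_delta x \<in> fv_space X" using x yt by (simp_all add: fv_delta_in)
    have dd: "(\<lambda>z. fv_delta y z - fv_delta x z) \<in> fv_space X" using fv_diff d1 by blast
    have "p (fv_delta y) = p (\<lambda>z. (fv_delta y z - fv_delta x z) + fv_delta x z)" by simp
    also have "\<dots> \<le> p (\<lambda>z. fv_delta y z - fv_delta x z) + p (fv_delta x)"
      using sn_tri[OF sp dd d1(2)] by simp
    finally have 1: "p (fv_delta y) \<le> p (\<lambda>z. fv_delta y z - fv_delta x z) + p (fv_delta x)" .
    have "p (fv_delta x) = p (\<lambda>z. (-1) * (fv_delta y z - fv_delta x z) + fv_delta y z)" by simp
    also have "\<dots> \<le> p (\<lambda>z. (-1) * (fv_delta y z - fv_delta x z)) + p (fv_delta y)"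
      by (rule sn_tri[OF sp fv_scale[OF dd] d1(1)])
    also have "\<dots> = p (\<lambda>z. fv_delta y z - fv_delta x z) + p (fv_delta y)"
      using sn_scale[OF sp dd, of "-1"] by simp
    finally have 2: "p (fv_delta x) \<le> p (\<lambda>z. fv_delta y z - fv_delta x z) + p (fv_delta y)" .
    have 3: "p (\<lambda>z. fv_delta y z - fv_delta x z) < e" using U(3) y by blast
    show ?thesis unfolding abs_less_iff using 1 2 3 by linarith
  qed
  then show "\<exists>U. openin X U \<and> x \<in> U \<and> (\<forall>y\<in>U. \<bar>p (fv_delta y) - p (fv_delta x)\<bar> < e)"
    using U by blast
qed

lemma open_ball_inside:
  assumes "openin (free_lcs X) U" "f \<in> U"
  obtains p e where "admissible_seminorm X p" "e > 0" "{g \<in> fv_space X. p (\<lambda>y. g y - f y) < e} \<subseteq> U"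
proof -
  have "\<forall>f\<in>U. \<exists>p e. admissible_seminorm X p \<and> e > 0 \<and> {g \<in> fv_space X. p (\<lambda>y. g y - f y) < e} \<subseteq> U"
    using assms(1) by (simp add: openin_free)
  then obtain p e where "admissible_seminorm X p" "e > 0" "{g \<in> fv_space X. p (\<lambda>y. g y - f y) < e} \<subseteq> U"
    using assms(2) by blast
  then show ?thesis by (rule that)
qed

lemma sep_fun:
  assumes "completely_regular_space X" "Hausdorff_space X" "finite F" "F \<subseteq> topspace X"
    "x \<in> topspace X" "x \<notin> F"
  obtains \<phi> where "continuous_map X euclideanreal \<phi>" "\<phi> x = 1" "\<And>y. y \<in> F \<Longrightarrow> \<phi> y = 0"
proof -
  have cl: "closedin X F" using closedin_Hausdorff_finite[OF assms(2) assms(4) assms(3)] .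
  have xin: "x \<in> topspace X - F" using assms(5,6) by blast
  have "\<exists>f. continuous_map X (top_of_set {0..1::real}) f \<and> f x = 0 \<and> f ` F \<subseteq> {1}"
    using assms(1)[unfolded completely_regular_space_def, rule_format, OF conjI[OF cl xin]] .
  then obtain f where f: "continuous_map X (top_of_set {0..1::real}) f" "f x = 0" "f ` F \<subseteq> {1}"
    by blast
  have "continuous_map X euclideanreal f"
    using f(1) by (simp add: continuous_map_in_subtopology)
  then have c: "continuous_map X euclideanreal (\<lambda>y. 1 - f y)"
    by (intro continuous_map_diff continuous_map_const[THEN iffD2]) auto
  have "1 - f x = 1" using f(2) by simp
  moreover have "\<And>y. y \<in> F \<Longrightarrow> 1 - f y = 0" using f(3) by auto
  ultimately show ?thesis by (rule that[OF c])
qed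

lemma fv_delta_inj: "fv_delta a = fv_delta b \<Longrightarrow> a = b"
  unfolding fv_delta_def by (metis zero_neq_one)

lemma lin_indep_delta: "lin_indep (fv_delta ` A)"
  unfolding lin_indep_def
proof (intro allI impI ballI)
  fix S c s
  assume H: "finite S \<and> S \<subseteq> fv_delta ` A \<and> (\<lambda>y. \<Sum>s\<in>S. c s * s y) = (\<lambda>y. 0)" and s: "s \<in> S"
  obtain a where a: "s = fv_delta a" using H s by blast
  have "(\<Sum>s'\<in>S. c s' * s' a) = 0" using fun_cong[OF conjunct2[OF conjunct2[OF H]], of a] by simp
  moreover have "(\<Sum>s'\<in>S. c s' * s' a) = c s * s a + (\<Sum>s'\<in>S - {s}. c s' * s' a)"
    using H s by (simp add: sum.remove)
  moreover have "(\<Sum>s'\<in>S - {s}. c s' * s' a) = 0"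
  proof (rule sum.neutral, rule ballI)
    fix s' assume s': "s' \<in> S - {s}"
    then obtain b where b: "s' = fv_delta b" using H by blast
    then have "a \<noteq> b" using s' a by auto
    then show "c s' * s' a = 0" using b by (simp add: fv_delta_def)
  qed
  moreover have "s a = 1" using a by (simp add: fv_delta_def)
  ultimately show "c s = 0" by simp
qed

lemma fb_bound:
  assumes "functionally_bounded X A" "continuous_map X euclideanreal f"
  obtains M where "M > 0" "\<And>a. a \<in> A \<Longrightarrow> \<bar>f a\<bar> \<le> M"
proof -
  have "bounded (f ` A)" using assms unfolding functionally_bounded_def by blast
  then obtain M where M: "\<forall>y\<in>f ` A. norm y \<le> M" unfolding bounded_iff by blast
  show ?thesis
  proof (rule that[of "max M 1"])
    fix a assume "a \<in> A" then show "\<bar>f a\<bar> \<le> max M 1" using M by fastforce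
  qed simp
qed

lemma bounded_delta:
  assumes "functionally_bounded X A"
  shows "tvs_bounded (free_lcs X) (fv_delta ` A)"
  unfolding tvs_bounded_def
proof (intro allI impI)
  fix U assume U: "openin (free_lcs X) U \<and> (\<lambda>y. 0) \<in> U"
  obtain p e where p: "admissible_seminorm X p" "e > 0" "{g \<in> fv_space X. p (\<lambda>y. g y - 0) < e} \<subseteq> U"
    using open_ball_inside[of X U "\<lambda>y. 0"] U by blast
  have sp: "seminorm_on (fv_space X) p" using p(1) admissible_sn by blast
  obtain M where M: "M > 0" "\<And>a. a \<in> A \<Longrightarrow> \<bar>p (fv_delta a)\<bar> \<le> M"
    using fb_bound[OF assms adm_delta_cont[OF p(1)]] by blast
  obtain n :: nat where n: "real n > M / e" using reals_Archimedean2 by blast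
  have "M / e > 0" using M(1) p(2) by simp
  then have npos: "real n > 0" using n by linarith
  have "fv_delta a \<in> (\<lambda>f. (\<lambda>y. real n * f y)) ` U" if a: "a \<in> A" for a
  proof -
    have AX: "A \<subseteq> topspace X" using assms by (simp add: functionally_bounded_def)
    have dV: "fv_delta a \<in> fv_space X" using AX a by (intro fv_delta_in) blast
    let ?h = "\<lambda>y. (1 / real n) * fv_delta a y"
    have hV: "?h \<in> fv_space X" using fv_scale[OF dV] .
    have "p ?h = \<bar>1 / real n\<bar> * p (fv_delta a)" by (rule sn_scale[OF sp dV])
    then have "p ?h = (1 / real n) * p (fv_delta a)" using npos by simp
    also have "\<dots> \<le> M / real n" using M(2)[OF a] npos by (simp add: divide_right_mono)
    also have "\<dots> < e" using n npos p(2) by (simp add: divide_less_eq mult.commute pos_divide_less_eq)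
    finally have "p (\<lambda>y. ?h y - 0) < e" by simp
    then have hU: "?h \<in> U" using p(3) hV by blast
    have eq: "fv_delta a = (\<lambda>y. real n * ?h y)" using npos by auto
    show ?thesis by (rule image_eqI[where x="?h" and f="\<lambda>f. (\<lambda>y. real n * f y)", OF eq hU])
  qed
  then have "fv_delta ` A \<subseteq> (\<lambda>f. (\<lambda>y. real n * f y)) ` U" by (intro image_subsetI)
  then show "\<exists>n::nat. fv_delta ` A \<subseteq> (\<lambda>f. (\<lambda>y. real n * f y)) ` U" by (rule exI)
qed

lemma dir_2_3:
  assumes "\<forall>B. B \<subseteq> topspace (free_lcs X) \<and> tvs_bounded (free_lcs X) B \<and> lin_indep B \<longrightarrow> finite B"
  shows "\<forall>A. functionally_bounded X A \<longrightarrow> finite A"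
proof (intro allI impI)
  fix A assume A: "functionally_bounded X A"
  have "fv_delta ` A \<subseteq> topspace (free_lcs X)"
    using A by (auto simp: functionally_bounded_def intro!: fv_delta_in)
  then have "finite (fv_delta ` A)" using assms bounded_delta[OF A] lin_indep_delta[of A] by simp
  moreover have "inj_on fv_delta A" using fv_delta_inj by (meson inj_onI)
  ultimately show "finite A" using finite_imageD by blast
qed

lemma openin_real_pre:
  assumes "continuous_map X euclideanreal h"
  shows "openin X {y \<in> topspace X. \<bar>h y - c\<bar> < r}"
proof -
  have "openin X {y \<in> topspace X. dist c (h y) < r}"
    using openin_continuous_map_preimage[OF assms, of "ball c r"] by simp
  moreover have "{y \<in> topspace X. dist c (h y) < r} = {y \<in> topspace X. \<bar>h y - c\<bar> < r}"
    by (auto simp: dist_real_def abs_minus_commute)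
  ultimately show ?thesis by simp
qed

lemma subsingleton_finite: "(\<And>i j. i \<in> A \<Longrightarrow> j \<in> A \<Longrightarrow> i = j) \<Longrightarrow> finite A"
  by (metis finite.simps insertI1 subsetI subset_singletonD finite_subset)

lemma supp_finite:
  assumes cr: "completely_regular_space X" and hd: "Hausdorff_space X"
    and fb: "\<forall>A. functionally_bounded X A \<longrightarrow> finite A"
    and BV: "B \<subseteq> fv_space X" and bdd: "tvs_bounded (free_lcs X) B"
  shows "finite (\<Union>b\<in>B. {x. b x \<noteq> 0})"
proof (rule ccontr)
  define S where "S = (\<Union>b\<in>B. {x. b x \<noteq> 0})"
  assume "\<not> finite (\<Union>b\<in>B. {x. b x \<noteq> 0})"
  then have Sinf: "infinite S" by (simp add: S_def)
  have ST: "S \<subseteq> topspace X" using BV unfolding S_def fv_space_def by blast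
  have "\<not> functionally_bounded X S" using fb Sinf by blast
  then obtain f where fc: "continuous_map X euclideanreal f" and fu: "\<not> bounded (f ` S)"
    using ST unfolding functionally_bounded_def by blast
  define g where "g = (\<lambda>x. \<bar>f x\<bar>)"
  have gc: "continuous_map X euclideanreal g" unfolding g_def using fc by (intro continuous_intros)
  have gu: "\<exists>x\<in>S. g x > M" for M
  proof (rule ccontr)
    assume "\<not> (\<exists>x\<in>S. g x > M)"
    then have "\<forall>y\<in>f ` S. norm y \<le> M" by (auto simp: g_def)
    then have "bounded (f ` S)" unfolding bounded_iff by blast
    then show False using fu by blast
  qed
  obtain x0 where x0: "x0 \<in> S" using Sinf by (metis finite.emptyI ex_in_conv)
  define nxt where "nxt = (\<lambda>x. SOME y. y \<in> S \<and> g y > g x + 3)"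
  have nxt: "nxt x \<in> S \<and> g (nxt x) > g x + 3" for x
    unfolding nxt_def using gu[of "g x + 3"] by (rule someI2_bex) auto
  define xs where "xs = (\<lambda>k. (nxt ^^ k) x0)"
  have xsS: "xs k \<in> S" for k
    by (cases k) (auto simp: xs_def x0 nxt)
  define t where "t = (\<lambda>k. g (xs k))"
  have tstep: "t (Suc k) > t k + 3" for k
    unfolding t_def xs_def using nxt by simp
  have tmono: "t j \<ge> t i + 3 * (real j - real i)" if "i \<le> j" for i j
    using that
  proof (induction j)
    case 0 then show ?case by simp
  next
    case (Suc j)
    show ?case
    proof (cases "i = Suc j")
      case True then show ?thesis by simp
    next
      case False
      then have "i \<le> j" using Suc.prems by simp
      then show ?thesis using Suc.IH tstep[of j] by simp
    qed
  qed
  have tsep: "\<bar>t i - t j\<bar> \<ge> 3" if "i \<noteq> j" for i j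
  proof (cases "i < j")
    case True then show ?thesis using tmono[of i j] by simp
  next
    case False then have "j < i" using that by simp
    then show ?thesis using tmono[of j i] by simp
  qed
  have uniq: "i = j" if "\<bar>g y - t i\<bar> < 3/2" "\<bar>g y - t j\<bar> < 3/2" for y i j
  proof (rule ccontr)
    assume "i \<noteq> j"
    then have "3 \<le> \<bar>t i - t j\<bar>" by (rule tsep)
    then show False using that by linarith
  qed
  define bs where "bs = (\<lambda>k. SOME b. b \<in> B \<and> b (xs k) \<noteq> 0)"
  have bs: "bs k \<in> B \<and> bs k (xs k) \<noteq> 0" for k
  proof -
    have "\<exists>b. b \<in> B \<and> b (xs k) \<noteq> 0" using xsS[of k] unfolding S_def by blast
    then show ?thesis unfolding bs_def by (rule someI_ex)
  qed
  have bsV: "bs k \<in> fv_space X" for k using bs BV by blast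
  define Fk where "Fk = (\<lambda>k. {y. bs k y \<noteq> 0} - {xs k})"
  have Fk: "finite (Fk k)" "Fk k \<subseteq> topspace X" "xs k \<in> topspace X" "xs k \<notin> Fk k" for k
    using bsV[of k] xsS[of k] ST unfolding Fk_def fv_space_def by auto
  define psi where "psi = (\<lambda>k. SOME \<phi>. continuous_map X euclideanreal \<phi> \<and> \<phi> (xs k) = 1 \<and> (\<forall>y\<in>Fk k. \<phi> y = 0))"
  have psi: "continuous_map X euclideanreal (psi k) \<and> psi k (xs k) = 1 \<and> (\<forall>y\<in>Fk k. psi k y = 0)" for k
  proof -
    obtain \<phi> where "continuous_map X euclideanreal \<phi>" "\<phi> (xs k) = 1" "\<And>y. y \<in> Fk k \<Longrightarrow> \<phi> y = 0"
      using sep_fun[OF cr hd Fk(1,2,3,4)] by blast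
    then have "\<exists>\<phi>. continuous_map X euclideanreal \<phi> \<and> \<phi> (xs k) = 1 \<and> (\<forall>y\<in>Fk k. \<phi> y = 0)" by blast
    then show ?thesis unfolding psi_def by (rule someI_ex)
  qed
  define beta where "beta = (\<lambda>k y. max 0 (1 - \<bar>g y - t k\<bar>))"
  define c where "c = (\<lambda>k. real k / \<bar>bs k (xs k)\<bar>)"
  define phi where "phi = (\<lambda>k y. c k * psi k y * beta k y)"
  have phi_nz: "\<bar>g y - t k\<bar> < 1" if "phi k y \<noteq> 0" for k y
    using that unfolding phi_def beta_def by (cases "\<bar>g y - t k\<bar> < 1") auto
  have phic: "continuous_map X euclideanreal (phi k)" for k
  proof -
    have "continuous_map X euclideanreal (beta k)"
      unfolding beta_def using gc by (intro continuous_intros)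
    then show ?thesis unfolding phi_def using psi[of k] by (intro continuous_intros) auto
  qed
  have phi_xs: "phi k (xs k) = c k" for k
    using psi[of k] unfolding phi_def beta_def t_def by simp
  have pair_bs: "pair (bs k) (phi k) = real k * sgn (bs k (xs k))" for k
  proof -
    have "pair (bs k) (phi k) = (\<Sum>y\<in>{y. bs k y \<noteq> 0}. bs k y * phi k y)" by (simp add: pair_def)
    also have "\<dots> = bs k (xs k) * phi k (xs k) + (\<Sum>y\<in>{y. bs k y \<noteq> 0} - {xs k}. bs k y * phi k y)"
      using bsV[of k] bs[of k] by (subst sum.remove) (auto simp: fv_space_def)
    also have "(\<Sum>y\<in>{y. bs k y \<noteq> 0} - {xs k}. bs k y * phi k y) = 0"
      using psi[of k] by (intro sum.neutral) (auto simp: phi_def Fk_def)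
    finally show ?thesis using bs[of k] by (simp add: phi_xs c_def sgn_if)
  qed
  define Ks where "Ks = (\<lambda>h::'a \<Rightarrow> real. {k. \<exists>y. h y \<noteq> 0 \<and> phi k y \<noteq> 0})"
  have Ks_fin: "finite (Ks h)" if "h \<in> fv_space X" for h
  proof -
    have "Ks h \<subseteq> (\<Union>y\<in>{y. h y \<noteq> 0}. {k. phi k y \<noteq> 0})" unfolding Ks_def by blast
    moreover have "finite {k. phi k y \<noteq> 0}" for y
    proof (rule subsingleton_finite)
      fix i j assume "i \<in> {k. phi k y \<noteq> 0}" "j \<in> {k. phi k y \<noteq> 0}"
      then have "\<bar>g y - t i\<bar> < 1" "\<bar>g y - t j\<bar> < 1" using phi_nz by auto
      then show "i = j" by (intro uniq[of y]) auto
    qed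
    moreover have "finite {y. h y \<noteq> 0}" using that by (simp add: fv_space_def)
    ultimately show ?thesis by (meson finite_UN_I finite_subset)
  qed
  define P where "P = (\<lambda>h. \<Sum>k\<in>Ks h. \<bar>pair h (phi k)\<bar>)"
  have P_sup: "P h = (\<Sum>k\<in>T. \<bar>pair h (phi k)\<bar>)" if "finite T" "Ks h \<subseteq> T" for h T
    unfolding P_def
  proof (rule sum.mono_neutral_left[OF that(1) that(2)], rule ballI)
    fix k assume "k \<in> T - Ks h"
    then have "\<And>y. h y \<noteq> 0 \<Longrightarrow> phi k y = 0" unfolding Ks_def by blast
    then have "pair h (phi k) = 0" by (rule pair_zero_fun)
    then show "\<bar>pair h (phi k)\<bar> = 0" by simp
  qed
  have Psn: "seminorm_on (fv_space X) P"
    unfolding seminorm_on_def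
  proof (intro conjI ballI allI)
    fix h assume "h \<in> fv_space X" then show "0 \<le> P h" unfolding P_def by (simp add: sum_nonneg)
  next
    fix h a assume h: "h \<in> fv_space X"
    have "Ks (\<lambda>y. a * h y) \<subseteq> Ks h" unfolding Ks_def by auto
    then have "P (\<lambda>y. a * h y) = (\<Sum>k\<in>Ks h. \<bar>pair (\<lambda>y. a * h y) (phi k)\<bar>)"
      using P_sup Ks_fin[OF h] by blast
    also have "\<dots> = \<bar>a\<bar> * P h" by (simp add: P_def pair_scale abs_mult sum_distrib_left)
    finally show "P (\<lambda>y. a * h y) = \<bar>a\<bar> * P h" .
  next
    fix h1 h2 assume h: "h1 \<in> fv_space X" "h2 \<in> fv_space X"
    define T where "T = Ks h1 \<union> Ks h2"
    have fT: "finite T" using Ks_fin h by (simp add: T_def)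
    have "Ks (\<lambda>y. h1 y + h2 y) \<subseteq> T"
    proof
      fix k assume "k \<in> Ks (\<lambda>y. h1 y + h2 y)"
      then obtain y where "h1 y + h2 y \<noteq> 0" "phi k y \<noteq> 0" unfolding Ks_def by blast
      then have "h1 y \<noteq> 0 \<or> h2 y \<noteq> 0" by auto
      then show "k \<in> T" using \<open>phi k y \<noteq> 0\<close> unfolding T_def Ks_def by blast
    qed
    then have "P (\<lambda>y. h1 y + h2 y) = (\<Sum>k\<in>T. \<bar>pair (\<lambda>y. h1 y + h2 y) (phi k)\<bar>)"
      using P_sup fT by blast
    also have "\<dots> = (\<Sum>k\<in>T. \<bar>pair h1 (phi k) + pair h2 (phi k)\<bar>)"
      using pair_add[OF h] by simp
    also have "\<dots> \<le> (\<Sum>k\<in>T. \<bar>pair h1 (phi k)\<bar> + \<bar>pair h2 (phi k)\<bar>)"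
      by (rule sum_mono) (rule abs_triangle_ineq)
    also have "\<dots> = P h1 + P h2"
      using P_sup[OF fT, of h1] P_sup[OF fT, of h2] by (simp add: sum.distrib T_def)
    finally show "P (\<lambda>y. h1 y + h2 y) \<le> P h1 + P h2" .
  qed
  have Ks_dd: "Ks (\<lambda>z. fv_delta y z - fv_delta x z) \<subseteq> {k. \<bar>g x - t k\<bar> < 3/2}"
    if "\<bar>g y - g x\<bar> < 1/2" for x y
  proof
    fix k assume "k \<in> Ks (\<lambda>z. fv_delta y z - fv_delta x z)"
    then obtain z where z: "fv_delta y z - fv_delta x z \<noteq> 0" "phi k z \<noteq> 0" unfolding Ks_def by blast
    have "z = x \<or> z = y" using z(1) by (auto simp: fv_delta_def split: if_splits)
    moreover have gz: "\<bar>g z - t k\<bar> < 1" using phi_nz z(2) by blast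
    ultimately have "\<bar>g x - t k\<bar> < 3/2"
    proof (elim disjE)
      assume "z = x" then show ?thesis using gz by simp
    next
      assume "z = y" then have "\<bar>g y - t k\<bar> < 1" using gz by simp
      then show ?thesis using that by linarith
    qed
    then show "k \<in> {k. \<bar>g x - t k\<bar> < 3/2}" by simp
  qed
  have Padm: "admissible_seminorm X P"
    unfolding admissible_seminorm_def
  proof (intro conjI Psn ballI allI impI)
    fix x e assume x: "x \<in> topspace X" and e: "(e::real) > 0"
    show "\<exists>U. openin X U \<and> x \<in> U \<and> (\<forall>y\<in>U. P (\<lambda>z. fv_delta y z - fv_delta x z) < e)"
    proof (cases "\<exists>k0. \<bar>g x - t k0\<bar> < 3/2")
      case True
      then obtain k0 where k0: "\<bar>g x - t k0\<bar> < 3/2" by blast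
      have Kk0: "{k. \<bar>g x - t k\<bar> < 3/2} \<subseteq> {k0}"
      proof
        fix k assume "k \<in> {k. \<bar>g x - t k\<bar> < 3/2}"
        then have "\<bar>g x - t k\<bar> < 3/2" by simp
        then have "k = k0" using uniq[of x k k0] k0 by blast
        then show "k \<in> {k0}" by simp
      qed
      define U where "U = {y \<in> topspace X. \<bar>g y - g x\<bar> < 1/2} \<inter> {y \<in> topspace X. \<bar>phi k0 y - phi k0 x\<bar> < e}"
      have "openin X U" unfolding U_def
        by (intro openin_Int openin_real_pre gc phic)
      moreover have "x \<in> U" using x e by (simp add: U_def)
      moreover have "P (\<lambda>z. fv_delta y z - fv_delta x z) < e" if y: "y \<in> U" for y
      proof -
        have sub: "Ks (\<lambda>z. fv_delta y z - fv_delta x z) \<subseteq> {k0}"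
          using Ks_dd[of y x] y Kk0 unfolding U_def by blast
        then have "P (\<lambda>z. fv_delta y z - fv_delta x z) = (\<Sum>k\<in>{k0}. \<bar>pair (\<lambda>z. fv_delta y z - fv_delta x z) (phi k)\<bar>)"
          using P_sup[OF _ sub] by simp
        also have "\<dots> = \<bar>phi k0 y - phi k0 x\<bar>" by (simp add: pair_delta_diff)
        finally show ?thesis using y by (simp add: U_def)
      qed
      ultimately show ?thesis by blast
    next
      case False
      define U where "U = {y \<in> topspace X. \<bar>g y - g x\<bar> < 1/2}"
      have "openin X U" unfolding U_def by (intro openin_real_pre gc)
      moreover have "x \<in> U" using x by (simp add: U_def)
      moreover have "P (\<lambda>z. fv_delta y z - fv_delta x z) < e" if y: "y \<in> U" for y
      proof -
        have sub: "Ks (\<lambda>z. fv_delta y z - fv_delta x z) \<subseteq> {}"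
        proof
          fix k assume k: "k \<in> Ks (\<lambda>z. fv_delta y z - fv_delta x z)"
          have "\<bar>g y - g x\<bar> < 1/2" using y by (simp add: U_def)
          then have "\<bar>g x - t k\<bar> < 3/2" using Ks_dd[of y x] k by blast
          then show "k \<in> {}" using False by blast
        qed
        then have "P (\<lambda>z. fv_delta y z - fv_delta x z) = (\<Sum>k\<in>{}. \<bar>pair (\<lambda>z. fv_delta y z - fv_delta x z) (phi k)\<bar>)"
          using P_sup[OF _ sub] by simp
        then show ?thesis using e by simp
      qed
      ultimately show ?thesis by blast
    qed
  qed
  have P0: "P (\<lambda>y. 0) = 0" unfolding P_def Ks_def by simp
  define W where "W = {h \<in> fv_space X. P (\<lambda>y. h y - 0) < 1}"
  have "openin (free_lcs X) W" unfolding W_def by (rule ball_open[OF Padm fv_zero])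
  moreover have "(\<lambda>y. 0) \<in> W" using P0 by (simp add: W_def)
  ultimately obtain N :: nat where N: "B \<subseteq> (\<lambda>f. (\<lambda>y. real N * f y)) ` W"
    using bdd unfolding tvs_bounded_def by blast
  have "P (bs k) \<le> real N" for k
  proof -
    obtain h where h: "h \<in> W" "bs k = (\<lambda>y. real N * h y)" using N bs[of k] by blast
    have hV: "h \<in> fv_space X" and Ph: "P h < 1" using h(1) by (auto simp: W_def)
    have "P (bs k) = real N * P h" using h(2) Psn hV by (simp add: sn_scale)
    also have "\<dots> \<le> real N" using Ph by (simp add: mult_left_le)
    finally show ?thesis .
  qed
  moreover have "P (bs k) \<ge> real k" if "k > 0" for k
  proof -
    have "c k \<noteq> 0" using bs[of k] that by (simp add: c_def)
    then have "k \<in> Ks (bs k)" unfolding Ks_def using bs[of k] phi_xs[of k] by auto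
    then have "\<bar>pair (bs k) (phi k)\<bar> \<le> P (bs k)"
      unfolding P_def by (rule member_le_sum) (use Ks_fin bsV in auto)
    moreover have "\<bar>pair (bs k) (phi k)\<bar> = real k" using bs[of k] by (simp add: pair_bs abs_mult)
    ultimately show ?thesis by simp
  qed
  ultimately have "real (Suc N) \<le> real N" by (meson order_trans zero_less_Suc)
  then show False by simp
qed

lemma sum_fun_apply': "(\<Sum>j\<in>J. (f j :: 'a \<Rightarrow> real)) = (\<lambda>y. \<Sum>j\<in>J. f j y)"
proof (induction J rule: infinite_finite_induct)
  case (infinite A) then show ?case by (simp add: zero_fun_def)
next
  case empty then show ?case by (simp add: zero_fun_def)
next
  case (insert x F) then show ?case by (simp add: plus_fun_def)
qed

lemma lin_indep_finite_supp:
  assumes li: "lin_indep B" and F: "finite F" and supp: "\<And>b y. b \<in> B \<Longrightarrow> b y \<noteq> 0 \<Longrightarrow> y \<in> F"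
  shows "finite B"
proof -
  define sc :: "real \<Rightarrow> ('a \<Rightarrow> real) \<Rightarrow> ('a \<Rightarrow> real)" where "sc = (\<lambda>c f. (\<lambda>y. c * f y))"
  interpret V: vector_space sc
    by unfold_locales (auto simp: sc_def fun_eq_iff algebra_simps)
  have ind: "\<not> V.dependent B"
  proof
    assume "V.dependent B"
    then obtain T u where T: "finite T" "T \<subseteq> B" "(\<Sum>v\<in>T. sc (u v) v) = 0" "\<exists>v\<in>T. u v \<noteq> 0"
      unfolding V.dependent_explicit by blast
    have "(\<lambda>y. \<Sum>v\<in>T. u v * v y) = (\<lambda>y. 0)"
      using T(3) unfolding sum_fun_apply' sc_def by (simp add: zero_fun_def)
    then have "\<forall>v\<in>T. u v = 0" using li T(1,2) unfolding lin_indep_def by blast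
    then show False using T(4) by blast
  qed
  have sp: "B \<subseteq> V.span (fv_delta ` F)"
  proof
    fix b assume b: "b \<in> B"
    have "b = (\<Sum>x\<in>F. sc (b x) (fv_delta x))"
    proof -
      have "b y = (\<Sum>x\<in>F. b x * fv_delta x y)" for y
      proof (cases "y \<in> F")
        case True
        then have "(\<Sum>x\<in>F. b x * fv_delta x y) = b y * fv_delta y y + (\<Sum>x\<in>F - {y}. b x * fv_delta x y)"
          using F by (simp add: sum.remove)
        also have "(\<Sum>x\<in>F - {y}. b x * fv_delta x y) = 0"
          by (rule sum.neutral) (auto simp: fv_delta_def)
        finally show ?thesis by (simp add: fv_delta_def)
      next
        case False
        then have "b y = 0" using supp b by blast
        moreover have "(\<Sum>x\<in>F. b x * fv_delta x y) = 0"
          using False by (intro sum.neutral) (auto simp: fv_delta_def)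
        ultimately show ?thesis by simp
      qed
      then show ?thesis unfolding sum_fun_apply' sc_def by blast
    qed
    also have "\<dots> \<in> V.span (fv_delta ` F)"
      by (intro V.span_sum V.span_scale V.span_base) auto
    finally show "b \<in> V.span (fv_delta ` F)" .
  qed
  show ?thesis using V.independent_span_bound[OF finite_imageI[OF F] ind sp] by blast
qed

lemma dir_3_2:
  assumes cr: "completely_regular_space X" and hd: "Hausdorff_space X"
    and fb: "\<forall>A. functionally_bounded X A \<longrightarrow> finite A"
  shows "\<forall>B. B \<subseteq> topspace (free_lcs X) \<and> tvs_bounded (free_lcs X) B \<and> lin_indep B \<longrightarrow> finite B"
proof (intro allI impI)
  fix B assume H: "B \<subseteq> topspace (free_lcs X) \<and> tvs_bounded (free_lcs X) B \<and> lin_indep B"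
  have BV: "B \<subseteq> fv_space X" using H by simp
  have "finite (\<Union>b\<in>B. {x. b x \<noteq> 0})" using supp_finite[OF cr hd fb BV] H by blast
  moreover have "lin_indep B" using H by blast
  ultimately show "finite B"
    using lin_indep_finite_supp[of B "\<Union>b\<in>B. {x. b x \<noteq> 0}"] by blast
qed

lemma open_conj:
  assumes "finite I" "\<And>i. i \<in> I \<Longrightarrow> continuous_map T euclideanreal (f i)" "\<And>i. i \<in> I \<Longrightarrow> open (Ob i)"
  shows "openin T {x \<in> topspace T. \<forall>i\<in>I. f i x \<in> Ob i}"
proof -
  have "{x \<in> topspace T. \<forall>i\<in>I. f i x \<in> Ob i} = topspace T \<inter> \<Inter> ((\<lambda>i. {x \<in> topspace T. f i x \<in> Ob i}) ` I)"
    by auto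
  moreover have "openin T (topspace T \<inter> \<Inter> ((\<lambda>i. {x \<in> topspace T. f i x \<in> Ob i}) ` I))"
  proof (rule openin_Int_Inter)
    show "finite ((\<lambda>i. {x \<in> topspace T. f i x \<in> Ob i}) ` I)" using assms(1) by simp
    show "openin T (topspace T)" by simp
    fix Y assume "Y \<in> (\<lambda>i. {x \<in> topspace T. f i x \<in> Ob i}) ` I"
    then obtain i where i: "i \<in> I" "Y = {x \<in> topspace T. f i x \<in> Ob i}" by blast
    show "openin T Y" unfolding i(2)
      by (rule openin_continuous_map_preimage[OF assms(2)[OF i(1)]]) (use assms(3)[OF i(1)] in simp)
  qed
  ultimately show ?thesis by simp
qed

lemma adm_cont:
  assumes "admissible_seminorm X p"
  shows "continuous_map (free_lcs X) euclideanreal p"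
  unfolding cont_real_iff
proof (intro ballI allI impI)
  fix f e assume f: "f \<in> topspace (free_lcs X)" and e: "(e::real) > 0"
  have fV: "f \<in> fv_space X" using f by simp
  have sp: "seminorm_on (fv_space X) p" using assms admissible_sn by blast
  let ?U = "{g \<in> fv_space X. p (\<lambda>y. g y - f y) < e}"
  have "openin (free_lcs X) ?U" by (rule ball_open[OF assms fV])
  moreover have "f \<in> ?U" using fV e sn_zero[OF sp fV] by simp
  moreover have "\<bar>p g - p f\<bar> < e" if g: "g \<in> ?U" for g
  proof -
    have gV: "g \<in> fv_space X" using g by simp
    have dV: "(\<lambda>y. g y - f y) \<in> fv_space X" using fv_diff[OF gV fV] .
    have "p g = p (\<lambda>y. (g y - f y) + f y)" by simp
    also have "\<dots> \<le> p (\<lambda>y. g y - f y) + p f" by (rule sn_tri[OF sp dV fV])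
    finally have 1: "p g \<le> p (\<lambda>y. g y - f y) + p f" .
    have "p f = p (\<lambda>y. (-1) * (g y - f y) + g y)" by simp
    also have "\<dots> \<le> p (\<lambda>y. (-1) * (g y - f y)) + p g" by (rule sn_tri[OF sp fv_scale[OF dV] gV])
    also have "p (\<lambda>y. (-1) * (g y - f y)) = p (\<lambda>y. g y - f y)"
      using sn_scale[OF sp dV, of "-1"] by simp
    finally have 2: "p f \<le> p (\<lambda>y. g y - f y) + p g" .
    have 3: "p (\<lambda>y. g y - f y) < e" using g by simp
    show ?thesis unfolding abs_less_iff using 1 2 3 by linarith
  qed
  ultimately show "\<exists>U. openin (free_lcs X) U \<and> f \<in> U \<and> (\<forall>g\<in>U. \<bar>p g - p f\<bar> < e)" by blast
qed

lemma pair_cont: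
  assumes "continuous_map X euclideanreal \<phi>"
  shows "continuous_map (free_lcs X) euclideanreal (\<lambda>g. pair g \<phi>)"
  unfolding cont_real_iff
proof (intro ballI allI impI)
  fix f e assume f: "f \<in> topspace (free_lcs X)" and e: "(e::real) > 0"
  have fV: "f \<in> fv_space X" using f by simp
  have adm: "admissible_seminorm X (\<lambda>g. \<bar>pair g \<phi>\<bar>)" by (rule admissible_pair[OF assms])
  let ?U = "{g \<in> fv_space X. \<bar>pair (\<lambda>y. g y - f y) \<phi>\<bar> < e}"
  have "openin (free_lcs X) ?U" by (rule ball_open[OF adm fV])
  moreover have "f \<in> ?U" using fV e by (simp add: pair_def)
  moreover have "\<bar>pair g \<phi> - pair f \<phi>\<bar> < e" if g: "g \<in> ?U" for g
    using g pair_diff[of g X f \<phi>] fV by simp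
  ultimately show "\<exists>U. openin (free_lcs X) U \<and> f \<in> U \<and> (\<forall>g\<in>U. \<bar>pair g \<phi> - pair f \<phi>\<bar> < e)" by blast
qed

lemma compact_fun_bound:
  assumes "compactin T K" "continuous_map T euclideanreal h"
  obtains M where "M > 0" "\<And>x. x \<in> K \<Longrightarrow> \<bar>h x\<bar> \<le> M"
proof -
  have "compactin euclideanreal (h ` K)" by (rule image_compactin[OF assms])
  then have "bounded (h ` K)" by (simp add: compact_imp_bounded)
  then obtain M where M: "\<forall>y\<in>h ` K. norm y \<le> M" unfolding bounded_iff by blast
  show ?thesis
  proof (rule that[of "max M 1"])
    fix x assume "x \<in> K" then show "\<bar>h x\<bar> \<le> max M 1" using M by fastforce
  qed simp
qed

lemma bounded_from_sn:
  assumes BV: "B \<subseteq> fv_space X"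
    and bd: "\<And>p. admissible_seminorm X p \<Longrightarrow> \<exists>M. \<forall>g\<in>B. p g \<le> M"
  shows "tvs_bounded (free_lcs X) B"
  unfolding tvs_bounded_def
proof (intro allI impI)
  fix U assume U: "openin (free_lcs X) U \<and> (\<lambda>y. 0) \<in> U"
  obtain p e where p: "admissible_seminorm X p" "e > 0" "{g \<in> fv_space X. p (\<lambda>y. g y - 0) < e} \<subseteq> U"
    using open_ball_inside[of X U "\<lambda>y. 0"] U by blast
  have sp: "seminorm_on (fv_space X) p" using p(1) admissible_sn by blast
  obtain M0 where M0: "\<forall>g\<in>B. p g \<le> M0" using bd[OF p(1)] by blast
  define M where "M = max M0 1"
  have M: "M > 0" "\<And>g. g \<in> B \<Longrightarrow> p g \<le> M" using M0 by (auto simp: M_def)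
  obtain n :: nat where n: "real n > M / e" using reals_Archimedean2 by blast
  have "M / e > 0" using M(1) p(2) by simp
  then have npos: "real n > 0" using n by linarith
  have "g \<in> (\<lambda>f. (\<lambda>y. real n * f y)) ` U" if g: "g \<in> B" for g
  proof -
    have gV: "g \<in> fv_space X" using g BV by blast
    let ?h = "\<lambda>y. (1 / real n) * g y"
    have hV: "?h \<in> fv_space X" using fv_scale[OF gV] .
    have "p ?h = \<bar>1 / real n\<bar> * p g" by (rule sn_scale[OF sp gV])
    then have "p ?h = (1 / real n) * p g" using npos by simp
    also have "\<dots> \<le> M / real n" using M(2)[OF g] npos by (simp add: divide_right_mono)
    also have "\<dots> < e" using n npos p(2) by (simp add: divide_less_eq mult.commute pos_divide_less_eq)
    finally have "p (\<lambda>y. ?h y - 0) < e" by simp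
    then have hU: "?h \<in> U" using p(3) hV by blast
    have eq: "g = (\<lambda>y. real n * ?h y)" using npos by auto
    show ?thesis by (rule image_eqI[where x="?h" and f="\<lambda>f. (\<lambda>y. real n * f y)", OF eq hU])
  qed
  then have "B \<subseteq> (\<lambda>f. (\<lambda>y. real n * f y)) ` U" by (intro subsetI)
  then show "\<exists>n::nat. B \<subseteq> (\<lambda>f. (\<lambda>y. real n * f y)) ` U" by (rule exI)
qed

lemma compact_tvs_bounded:
  assumes "compactin (free_lcs X) K"
  shows "tvs_bounded (free_lcs X) K"
proof (rule bounded_from_sn)
  show "K \<subseteq> fv_space X" using compactin_subset_topspace[OF assms] by simp
  fix p assume p: "admissible_seminorm X p"
  obtain M where "\<And>x. x \<in> K \<Longrightarrow> \<bar>p x\<bar> \<le> M" using compact_fun_bound[OF assms adm_cont[OF p]] by blast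
  then show "\<exists>M. \<forall>g\<in>K. p g \<le> M" by (meson abs_le_D1)
qed

lemma lebesgue_gen:
  assumes cpt: "compactin T S"
    and dc: "\<And>a. a \<in> S \<Longrightarrow> continuous_map T euclideanreal (d a)"
    and tri: "\<And>a b c. a \<in> S \<Longrightarrow> b \<in> S \<Longrightarrow> c \<in> S \<Longrightarrow> d a c \<le> d a b + d b c"
    and sym: "\<And>a b. a \<in> S \<Longrightarrow> b \<in> S \<Longrightarrow> d a b = d b a"
    and refl: "\<And>a. a \<in> S \<Longrightarrow> d a a = 0"
    and loc: "\<And>a. a \<in> S \<Longrightarrow> \<exists>U\<in>\<U>. \<exists>r>0. \<forall>y\<in>S. d a y < r \<longrightarrow> y \<in> U"
  shows "\<exists>\<delta>>0. \<forall>a\<in>S. \<exists>U\<in>\<U>. \<forall>y\<in>S. d a y < \<delta> \<longrightarrow> y \<in> U"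
proof -
  obtain Uf rf where Urf: "\<And>a. a \<in> S \<Longrightarrow> Uf a \<in> \<U> \<and> rf a > 0 \<and> (\<forall>y\<in>S. d a y < rf a \<longrightarrow> y \<in> Uf a)"
    using loc by metis
  define Ob where "Ob = (\<lambda>a. {y \<in> topspace T. \<bar>d a y - 0\<bar> < rf a / 2})"
  have Oopen: "openin T (Ob a)" if "a \<in> S" for a
    unfolding Ob_def by (rule openin_real_pre[OF dc[OF that]])
  have ST: "S \<subseteq> topspace T" using cpt compactin_subset_topspace by blast
  have Scov: "S \<subseteq> \<Union>(Ob ` S)"
  proof
    fix a assume a: "a \<in> S"
    then have "a \<in> Ob a" using ST refl[OF a] Urf[OF a] by (auto simp: Ob_def)
    then show "a \<in> \<Union>(Ob ` S)" using a by blast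
  qed
  obtain \<F> where F: "finite \<F>" "\<F> \<subseteq> Ob ` S" "S \<subseteq> \<Union>\<F>"
    using cpt Scov Oopen unfolding compactin_def by (metis (no_types, lifting) imageE)
  obtain C where C: "C \<subseteq> S" "finite C" "\<F> = Ob ` C" using finite_subset_image[OF F(1,2)] by blast
  show ?thesis
  proof (cases "C = {}")
    case True
    then have "S = {}" using F(3) C(3) by simp
    then show ?thesis by (intro exI[of _ 1]) simp
  next
    case False
    define \<delta> where "\<delta> = Min ((\<lambda>a. rf a / 2) ` C)"
    have dpos: "\<delta> > 0" unfolding \<delta>_def using C False Urf by (subst Min_gr_iff) auto
    have dle: "\<delta> \<le> rf a / 2" if "a \<in> C" for a unfolding \<delta>_def using C that by (intro Min_le) auto
    have "\<forall>a\<in>S. \<exists>U\<in>\<U>. \<forall>y\<in>S. d a y < \<delta> \<longrightarrow> y \<in> U"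
    proof
      fix a assume a: "a \<in> S"
      then obtain a' where a': "a' \<in> C" "a \<in> Ob a'" using F(3) C(3) by blast
      have a'S: "a' \<in> S" using a' C by blast
      have daa: "d a' a < rf a' / 2" using a'(2) by (auto simp: Ob_def)
      have "\<forall>y\<in>S. d a y < \<delta> \<longrightarrow> y \<in> Uf a'"
      proof (intro ballI impI)
        fix y assume y: "y \<in> S" "d a y < \<delta>"
        have "d a' y \<le> d a' a + d a y" by (rule tri[OF a'S a y(1)])
        also have "\<dots> < rf a'" using daa y(2) dle[OF a'(1)] by linarith
        finally show "y \<in> Uf a'" using Urf[OF a'S] y(1) by blast
      qed
      then show "\<exists>U\<in>\<U>. \<forall>y\<in>S. d a y < \<delta> \<longrightarrow> y \<in> U" using Urf[OF a'S] by blast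
    qed
    then show ?thesis using dpos by blast
  qed
qed

lemma floor_pair:
  fixes z :: int and u :: real
  assumes "of_int z < u" "u < of_int z + 2"
  shows "z \<in> {\<lfloor>u\<rfloor> - 1, \<lfloor>u\<rfloor>}"
proof -
  have 1: "z \<le> \<lfloor>u\<rfloor>" using assms(1) by (simp add: le_floor_iff)
  have "u < of_int (z + 2)" using assms(2) by simp
  then have "\<lfloor>u\<rfloor> < z + 2" by (simp only: floor_less_iff)
  then have 2: "\<lfloor>u\<rfloor> \<le> z + 1" by linarith
  show ?thesis using 1 2 by auto
qed

lemma dir_3_1:
  assumes cr: "completely_regular_space X" and hd: "Hausdorff_space X"
    and fb: "\<forall>A. functionally_bounded X A \<longrightarrow> finite A"
  shows "\<forall>K. compactin (free_lcs X) K \<longrightarrow> finite_dimensional_space (subtopology (free_lcs X) K)"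
proof (intro allI impI)
  fix K assume Kc: "compactin (free_lcs X) K"
  have KV: "K \<subseteq> fv_space X" using compactin_subset_topspace[OF Kc] by simp
  define F where "F = (\<Union>b\<in>K. {x. b x \<noteq> 0})"
  have Ffin: "finite F" using supp_finite[OF cr hd fb KV compact_tvs_bounded[OF Kc]] by (simp add: F_def)
  have FX: "F \<subseteq> topspace X" using KV by (auto simp: F_def fv_space_def)
  have suppK: "\<And>h y. h \<in> K \<Longrightarrow> y \<notin> F \<Longrightarrow> h y = 0" by (auto simp: F_def)
  define T where "T = subtopology (free_lcs X) K"
  have topT: "topspace T = K" using KV by (auto simp: T_def)
  have cT: "compactin T K" by (simp add: T_def compactin_subtopology Kc)
  define sep where "sep = (\<lambda>x. SOME \<phi>. continuous_map X euclideanreal \<phi> \<and> \<phi> x = 1 \<and> (\<forall>y\<in>F - {x}. \<phi> y = 0))"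
  have sep: "continuous_map X euclideanreal (sep x) \<and> sep x x = 1 \<and> (\<forall>y\<in>F - {x}. sep x y = 0)" if x: "x \<in> F" for x
  proof -
    obtain \<phi> where "continuous_map X euclideanreal \<phi>" "\<phi> x = 1" "\<And>y. y \<in> F - {x} \<Longrightarrow> \<phi> y = 0"
      using sep_fun[OF cr hd, of "F - {x}" x] Ffin FX x by blast
    then have "\<exists>\<phi>. continuous_map X euclideanreal \<phi> \<and> \<phi> x = 1 \<and> (\<forall>y\<in>F - {x}. \<phi> y = 0)" by blast
    then show ?thesis unfolding sep_def by (rule someI_ex)
  qed
  have coord: "pair h (sep x) = h x" if h: "h \<in> K" and x: "x \<in> F" for h x
  proof -
    have "pair h (sep x) = (\<Sum>y\<in>F. h y * sep x y)"
      by (rule pair_superset[OF Ffin]) (use suppK h in blast)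
    also have "\<dots> = h x * sep x x + (\<Sum>y\<in>F - {x}. h y * sep x y)"
      using Ffin x by (simp add: sum.remove)
    also have "(\<Sum>y\<in>F - {x}. h y * sep x y) = 0" using sep[OF x] by simp
    finally show ?thesis using sep[OF x] by simp
  qed
  have coordc: "continuous_map T euclideanreal (\<lambda>h. h x)" if x: "x \<in> F" for x
  proof -
    have "continuous_map T euclideanreal (\<lambda>h. pair h (sep x))"
      unfolding T_def by (rule continuous_map_from_subtopology[OF pair_cont]) (use sep[OF x] in blast)
    then show ?thesis by (rule continuous_map_eq) (use coord x topT in auto)
  qed
  define d where "d = (\<lambda>(h::'a \<Rightarrow> real) h'. \<Sum>x\<in>F. \<bar>h' x - h x\<bar>)"
  have dc: "continuous_map T euclideanreal (d h)" for h
    unfolding d_def using Ffin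
    by (intro continuous_map_sum) (auto intro!: continuous_intros coordc)
  have dtri: "d a c \<le> d a b + d b c" for a b c
  proof -
    have "d a c \<le> (\<Sum>x\<in>F. \<bar>b x - a x\<bar> + \<bar>c x - b x\<bar>)"
      unfolding d_def by (rule sum_mono) linarith
    then show ?thesis by (simp add: d_def sum.distrib)
  qed
  have dsym: "d a b = d b a" for a b unfolding d_def by (simp add: abs_minus_commute)
  have drefl: "d a a = 0" for a unfolding d_def by simp
  have dnn: "d a b \<ge> 0" for a b unfolding d_def by (simp add: sum_nonneg)
  obtain Mc where Mc: "Mc > 0" "\<And>h. h \<in> K \<Longrightarrow> \<bar>d (\<lambda>y. 0) h\<bar> \<le> Mc"
    using compact_fun_bound[OF cT dc[of "\<lambda>y. 0"]] by blast
  have coordb: "\<bar>h x\<bar> \<le> Mc" if "h \<in> K" "x \<in> F" for h x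
  proof -
    have "\<bar>h x\<bar> = \<bar>h x - 0\<bar>" by simp
    also have "\<dots> \<le> d (\<lambda>y. 0) h" unfolding d_def
      by (rule member_le_sum[where f="\<lambda>x. \<bar>h x - 0\<bar>"]) (use that Ffin in auto)
    also have "\<dots> \<le> Mc" using Mc(2)[OF that(1)] by simp
    finally show ?thesis .
  qed
  show "finite_dimensional_space (subtopology (free_lcs X) K)"
    unfolding finite_dimensional_space_def T_def[symmetric]
  proof (rule exI[of _ "2 ^ card F - 1"])
    show "covering_dim_le T (2 ^ card F - 1)"
      unfolding covering_dim_le_def
    proof (intro allI impI)
      fix \<U> assume U: "finite \<U> \<and> (\<forall>U\<in>\<U>. openin T U) \<and> \<Union>\<U> = topspace T"
      have loc: "\<exists>U\<in>\<U>. \<exists>r>0. \<forall>h'\<in>K. d h h' < r \<longrightarrow> h' \<in> U" if h: "h \<in> K" for h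
      proof -
        obtain U where U1: "U \<in> \<U>" "h \<in> U" using U h topT by blast
        have "openin T U" using U U1 by blast
        then obtain Ob where Ob: "openin (free_lcs X) Ob" "U = Ob \<inter> K"
          unfolding T_def openin_subtopology by blast
        have hO: "h \<in> Ob" using Ob U1 by blast
        obtain p e where p: "admissible_seminorm X p" "e > 0" "{g \<in> fv_space X. p (\<lambda>y. g y - h y) < e} \<subseteq> Ob"
          using open_ball_inside[OF Ob(1) hO] by blast
        have sp: "seminorm_on (fv_space X) p" using admissible_sn[OF p(1)] .
        define Mp where "Mp = 1 + (\<Sum>x\<in>F. p (fv_delta x))"
        have pd: "0 \<le> p (fv_delta x)" if "x \<in> F" for x
          using sn_nonneg[OF sp fv_delta_in] FX that by blast
        have Mp: "Mp > 0" "\<And>x. x \<in> F \<Longrightarrow> p (fv_delta x) \<le> Mp"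
        proof -
          show "Mp > 0" unfolding Mp_def using pd by (smt (verit) sum_nonneg)
          fix x assume x: "x \<in> F"
          have "p (fv_delta x) \<le> (\<Sum>x\<in>F. p (fv_delta x))"
            by (rule member_le_sum) (use x pd Ffin in auto)
          then show "p (fv_delta x) \<le> Mp" unfolding Mp_def by simp
        qed
        have "\<forall>h'\<in>K. d h h' < e / Mp \<longrightarrow> h' \<in> U"
        proof (intro ballI impI)
          fix h' assume h': "h' \<in> K" "d h h' < e / Mp"
          have eq: "(\<lambda>y. h' y - h y) = (\<lambda>y. \<Sum>x\<in>F. (h' x - h x) * fv_delta x y)"
          proof
            fix y show "h' y - h y = (\<Sum>x\<in>F. (h' x - h x) * fv_delta x y)"
            proof (cases "y \<in> F")
              case True
              then have "(\<Sum>x\<in>F. (h' x - h x) * fv_delta x y) = (h' y - h y) * fv_delta y y + (\<Sum>x\<in>F - {y}. (h' x - h x) * fv_delta x y)"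
                using Ffin by (simp add: sum.remove)
              also have "(\<Sum>x\<in>F - {y}. (h' x - h x) * fv_delta x y) = 0"
                by (rule sum.neutral) (auto simp: fv_delta_def)
              finally show ?thesis by (simp add: fv_delta_def)
            next
              case False
              then have "(\<Sum>x\<in>F. (h' x - h x) * fv_delta x y) = 0"
                by (intro sum.neutral) (auto simp: fv_delta_def)
              then show ?thesis using suppK[OF h False] suppK[OF h'(1) False] by simp
            qed
          qed
          have "p (\<lambda>y. h' y - h y) \<le> (\<Sum>x\<in>F. \<bar>h' x - h x\<bar> * p (fv_delta x))"
            unfolding eq by (rule sn_lincomb[OF sp Ffin]) (use FX in \<open>auto intro: fv_delta_in\<close>)
          also have "\<dots> \<le> (\<Sum>x\<in>F. \<bar>h' x - h x\<bar> * Mp)"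
            by (rule sum_mono) (use Mp in \<open>auto intro: mult_left_mono\<close>)
          also have "\<dots> = d h h' * Mp" by (simp add: d_def sum_distrib_right)
          also have "\<dots> < e" using h'(2) Mp(1) by (simp add: pos_less_divide_eq)
          finally have "p (\<lambda>y. h' y - h y) < e" .
          then have "h' \<in> Ob" using p(3) h'(1) KV by blast
          then show "h' \<in> U" using Ob(2) h'(1) by blast
        qed
        moreover have "e / Mp > 0" using p(2) Mp(1) by simp
        ultimately show ?thesis using U1(1) by blast
      qed
      obtain r where r: "r > 0" "\<And>h. h \<in> K \<Longrightarrow> \<exists>U\<in>\<U>. \<forall>h'\<in>K. d h h' < r \<longrightarrow> h' \<in> U"
        using lebesgue_gen[OF cT dc dtri dsym drefl loc] by blast
      define s where "s = r / (2 * (real (card F) + 1))"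
      have spos: "s > 0" using r(1) by (simp add: s_def)
      have sr: "real (card F) * (2 * s) < r"
      proof -
        have "real (card F) * (2 * s) = r * (real (card F) / (real (card F) + 1))"
          by (simp add: s_def field_simps)
        also have "\<dots> < r * 1" using r(1) by (intro mult_strict_left_mono) auto
        finally show ?thesis by simp
      qed
      define Q where "Q = (\<lambda>z::'a \<Rightarrow> int. {h \<in> K. \<forall>x\<in>F. \<bar>h x - (s * of_int (z x) + s)\<bar> < s})"
      define Nb :: int where "Nb = \<lceil>Mc / s\<rceil> + 2"
      define Zs where "Zs = PiE F (\<lambda>_. {-Nb..Nb})"
      define \<V> where "\<V> = Q ` Zs - {{}}"
      have QK: "Q z \<subseteq> K" for z by (auto simp: Q_def)
      have Qopen: "openin T (Q z)" for z
      proof -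
        have "openin T {h \<in> topspace T. \<forall>x\<in>F. (\<lambda>h. h x) h \<in> ball (s * of_int (z x) + s) s}"
          by (rule open_conj[OF Ffin]) (auto intro: coordc)
        moreover have "{h \<in> topspace T. \<forall>x\<in>F. (\<lambda>h. h x) h \<in> ball (s * of_int (z x) + s) s} = Q z"
          unfolding Q_def topT by (auto simp: dist_real_def abs_minus_commute)
        ultimately show ?thesis by simp
      qed
      have Zfin: "finite Zs" unfolding Zs_def using Ffin by (intro finite_PiE) auto
      have covK: "h \<in> \<Union>\<V>" if h: "h \<in> K" for h
      proof -
        define z where "z = restrict (\<lambda>x. \<lfloor>h x / s\<rfloor> - 1) F"
        have "z \<in> Zs"
        proof -
          have "z x \<in> {-Nb..Nb}" if x: "x \<in> F" for x
          proof -
            have hb: "\<bar>h x\<bar> \<le> Mc" by (rule coordb[OF h x])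
            have "\<bar>h x / s\<bar> \<le> Mc / s" using hb spos by (simp add: abs_divide divide_right_mono)
            then have "- (Mc / s) \<le> h x / s" "h x / s \<le> Mc / s" by linarith+
            moreover have "Mc / s \<le> of_int \<lceil>Mc / s\<rceil>" by (rule le_of_int_ceiling)
            ultimately have "- of_int \<lceil>Mc / s\<rceil> \<le> h x / s" "h x / s \<le> of_int \<lceil>Mc / s\<rceil>" by linarith+
            then have "- \<lceil>Mc / s\<rceil> - 1 \<le> \<lfloor>h x / s\<rfloor>" "\<lfloor>h x / s\<rfloor> \<le> \<lceil>Mc / s\<rceil>"
              by (simp_all add: le_floor_iff floor_le_iff)
            then show ?thesis using x by (simp add: z_def Nb_def)
          qed
          moreover have "z \<in> extensional F" by (simp add: z_def)
          ultimately show ?thesis unfolding Zs_def by (auto simp: PiE_iff)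
        qed
        moreover have "h \<in> Q z"
        proof -
          have "\<bar>h x - (s * of_int (z x) + s)\<bar> < s" if x: "x \<in> F" for x
          proof -
            have zx: "s * of_int (z x) + s = s * of_int \<lfloor>h x / s\<rfloor>" using x by (simp add: z_def algebra_simps)
            have f1: "of_int \<lfloor>h x / s\<rfloor> \<le> h x / s" "h x / s < of_int \<lfloor>h x / s\<rfloor> + 1" by linarith+
            have hs: "s * (h x / s) = h x" using spos by simp
            have "s * of_int \<lfloor>h x / s\<rfloor> \<le> s * (h x / s)" using f1(1) spos by (intro mult_left_mono) auto
            moreover have "s * (h x / s) < s * (of_int \<lfloor>h x / s\<rfloor> + 1)" using f1(2) spos by (intro mult_strict_left_mono) auto
            ultimately have "s * of_int \<lfloor>h x / s\<rfloor> \<le> h x" "h x < s * of_int \<lfloor>h x / s\<rfloor> + s"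
              unfolding hs by (simp_all add: distrib_left)
            then show ?thesis unfolding zx by linarith
          qed
          then show ?thesis using h by (simp add: Q_def)
        qed
        ultimately have "Q z \<in> \<V>" unfolding \<V>_def by blast
        then show ?thesis using \<open>h \<in> Q z\<close> by blast
      qed
      show "\<exists>\<V>. finite \<V> \<and> (\<forall>V\<in>\<V>. openin T V) \<and> \<Union>\<V> = topspace T \<and>
           (\<forall>V\<in>\<V>. \<exists>U\<in>\<U>. V \<subseteq> U) \<and>
           (\<forall>x\<in>topspace T. card {V\<in>\<V>. x \<in> V} \<le> 2 ^ card F - 1 + 1)"
      proof (intro exI[of _ \<V>] conjI ballI)
        show "finite \<V>" unfolding \<V>_def using Zfin by simp
        show "openin T V" if "V \<in> \<V>" for V using that Qopen unfolding \<V>_def by blast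
        show "\<Union>\<V> = topspace T"
        proof
          show "\<Union>\<V> \<subseteq> topspace T" unfolding \<V>_def topT using QK by blast
          show "topspace T \<subseteq> \<Union>\<V>" unfolding topT using covK by blast
        qed
        fix V assume V: "V \<in> \<V>"
        then obtain z where z: "z \<in> Zs" "V = Q z" "V \<noteq> {}" unfolding \<V>_def by blast
        then obtain h0 where h0: "h0 \<in> Q z" by blast
        have h0K: "h0 \<in> K" using h0 QK by blast
        obtain U where U1: "U \<in> \<U>" "\<forall>h'\<in>K. d h0 h' < r \<longrightarrow> h' \<in> U" using r(2)[OF h0K] by blast
        have "Q z \<subseteq> U"
        proof
          fix h' assume h': "h' \<in> Q z"
          have "d h0 h' \<le> (\<Sum>x\<in>F. 2 * s)" unfolding d_def
          proof (rule sum_mono)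
            fix x assume x: "x \<in> F"
            have "\<bar>h0 x - (s * of_int (z x) + s)\<bar> < s" "\<bar>h' x - (s * of_int (z x) + s)\<bar> < s"
              using h0 h' x by (auto simp: Q_def)
            then show "\<bar>h' x - h0 x\<bar> \<le> 2 * s" by linarith
          qed
          also have "\<dots> = real (card F) * (2 * s)" by simp
          also have "\<dots> < r" by (rule sr)
          finally show "h' \<in> U" using U1(2) h' QK by blast
        qed
        then show "\<exists>U\<in>\<U>. V \<subseteq> U" using U1(1) z(2) by blast
      next
        fix h assume "h \<in> topspace T"
        then have h: "h \<in> K" using topT by simp
        define P where "P = PiE F (\<lambda>x. {\<lfloor>h x / s\<rfloor> - 1, \<lfloor>h x / s\<rfloor>})"
        have Pfin: "finite P" unfolding P_def using Ffin by (intro finite_PiE) auto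
        have cardP: "card P = 2 ^ card F"
        proof -
          have "card P = (\<Prod>x\<in>F. card {\<lfloor>h x / s\<rfloor> - 1, \<lfloor>h x / s\<rfloor>})" unfolding P_def by (rule card_PiE[OF Ffin])
          also have "\<dots> = (\<Prod>x\<in>F. 2)" by (simp add: numeral_2_eq_2)
          finally show ?thesis by simp
        qed
        have sub: "{V\<in>\<V>. h \<in> V} \<subseteq> Q ` P"
        proof
          fix V assume "V \<in> {V\<in>\<V>. h \<in> V}"
          then obtain z where z: "z \<in> Zs" "V = Q z" "h \<in> Q z" unfolding \<V>_def by blast
          have "z \<in> P"
          proof -
            have "z x \<in> {\<lfloor>h x / s\<rfloor> - 1, \<lfloor>h x / s\<rfloor>}" if x: "x \<in> F" for x
            proof -
              have "\<bar>h x - (s * of_int (z x) + s)\<bar> < s" using z(3) x by (simp add: Q_def)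
              then have "s * of_int (z x) < h x" "h x < s * of_int (z x) + 2 * s" by linarith+
              then have "of_int (z x) < h x / s" "h x / s < of_int (z x) + 2"
                using spos by (simp_all add: field_simps)
              then show ?thesis by (rule floor_pair)
            qed
            moreover have "z \<in> extensional F" using z(1) unfolding Zs_def by (simp add: PiE_iff)
            ultimately show ?thesis unfolding P_def by (simp add: PiE_iff)
          qed
          then show "V \<in> Q ` P" using z(2) by blast
        qed
        have "card {V\<in>\<V>. h \<in> V} \<le> card (Q ` P)" by (rule card_mono[OF finite_imageI[OF Pfin] sub])
        also have "\<dots> \<le> card P" by (rule card_image_le[OF Pfin])
        also have "\<dots> = 2 ^ card F - 1 + 1" using cardP by simp
        finally show "card {V\<in>\<V>. h \<in> V} \<le> 2 ^ card F - 1 + 1" .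
      qed
    qed
  qed
qed

lemma kuhn_cover:
  fixes m :: nat and \<delta> :: real and \<W> :: "(nat \<Rightarrow> real) set set" and Q :: "(nat \<Rightarrow> real) set"
  assumes Q: "Q = {l. (\<forall>i<m. 0 \<le> l i \<and> l i \<le> 1) \<and> (\<forall>i. m \<le> i \<longrightarrow> l i = 0)}"
    and fin: "finite \<W>" and dpos: "\<delta> > 0"
    and leb: "\<And>l. l \<in> Q \<Longrightarrow> \<exists>W\<in>\<W>. \<forall>\<mu>\<in>Q. (\<Sum>i<m. \<bar>\<mu> i - l i\<bar>) < \<delta> \<longrightarrow> \<mu> \<in> W"
    and faces: "\<And>W i. W \<in> \<W> \<Longrightarrow> i < m \<Longrightarrow> (\<exists>l\<in>W. l i = 0) \<Longrightarrow> (\<exists>l\<in>W. l i = 1) \<Longrightarrow> False"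
  shows "\<exists>l\<in>Q. m + 1 \<le> card {W\<in>\<W>. l \<in> W}"
proof -
  define p :: nat where "p = nat \<lceil>real m / \<delta>\<rceil> + 1"
  have ppos: "p > 0" by (simp add: p_def)
  have "real m / \<delta> \<le> real (nat \<lceil>real m / \<delta>\<rceil>)" by linarith
  then have "real m / \<delta> < real p" by (simp add: p_def)
  then have mp: "real m / real p < \<delta>" using dpos ppos by (simp add: field_simps)
  define \<gamma> where "\<gamma> = (\<lambda>v::nat \<Rightarrow> nat. (\<lambda>i. if i < m then real (v i) / real p else 0))"
  have \<gamma>Q: "\<gamma> v \<in> Q" if "\<forall>j. v j \<le> p" for v
    using that ppos unfolding Q \<gamma>_def by (auto simp: divide_le_eq_1)
  define J where "J = (\<lambda>v. SOME W. W \<in> \<W> \<and> (\<forall>\<mu>\<in>Q. (\<Sum>i<m. \<bar>\<mu> i - \<gamma> v i\<bar>) < \<delta> \<longrightarrow> \<mu> \<in> W))"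
  have J: "J v \<in> \<W> \<and> (\<forall>\<mu>\<in>Q. (\<Sum>i<m. \<bar>\<mu> i - \<gamma> v i\<bar>) < \<delta> \<longrightarrow> \<mu> \<in> J v)" if "\<forall>j. v j \<le> p" for v
  proof -
    have "\<exists>W. W \<in> \<W> \<and> (\<forall>\<mu>\<in>Q. (\<Sum>i<m. \<bar>\<mu> i - \<gamma> v i\<bar>) < \<delta> \<longrightarrow> \<mu> \<in> W)"
      using leb[OF \<gamma>Q[OF that]] by blast
    then show ?thesis unfolding J_def by (rule someI_ex)
  qed
  have \<gamma>J: "\<gamma> v \<in> J v" if "\<forall>j. v j \<le> p" for v
    using J[OF that] \<gamma>Q[OF that] dpos by simp
  define G where "G = (\<lambda>W::(nat \<Rightarrow> real) set. (\<lambda>i. if \<exists>l\<in>W. l i = 1 then 1 else (0::nat)))"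
  define lab where "lab = (\<lambda>v. G (J v))"
  have L0: "\<forall>x j. (\<forall>j. x j \<le> p) \<and> j < m \<and> x j = 0 \<longrightarrow> lab x j = 0"
  proof (intro allI impI)
    fix x j assume H: "(\<forall>j. x j \<le> p) \<and> j < m \<and> x j = 0"
    have "\<gamma> x j = 0" using H by (simp add: \<gamma>_def)
    then have "\<exists>l\<in>J x. l j = 0" using \<gamma>J H by blast
    then have "\<not> (\<exists>l\<in>J x. l j = 1)" using faces[of "J x" j] J H by blast
    then show "lab x j = 0" by (simp add: lab_def G_def)
  qed
  have L1: "\<forall>x j. (\<forall>j. x j \<le> p) \<and> j < m \<and> x j = p \<longrightarrow> lab x j = 1"
  proof (intro allI impI)
    fix x j assume H: "(\<forall>j. x j \<le> p) \<and> j < m \<and> x j = p"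
    have "\<gamma> x j = 1" using H ppos by (simp add: \<gamma>_def)
    then have "\<exists>l\<in>J x. l j = 1" using \<gamma>J H by blast
    then show "lab x j = 1" by (simp add: lab_def G_def)
  qed
  have "odd (card {s. ksimplex p m s \<and> (reduced m \<circ> lab) ` s = {..m}})"
    by (rule kuhn_combinatorial[OF ppos L0 L1])
  then have "{s. ksimplex p m s \<and> (reduced m \<circ> lab) ` s = {..m}} \<noteq> {}"
    by (metis card.empty odd_card_imp_not_empty)
  then obtain s where s: "ksimplex p m s" "(reduced m \<circ> lab) ` s = {..m}" by blast
  obtain b u where ks: "kuhn_simplex p m b u s" using s(1) by (auto elim: ksimplex.cases)
  have sfin: "finite s" using ksimplex_card[OF s(1)] by (metis card_ge_0_finite zero_less_Suc)
  have sp: "\<forall>j. a j \<le> p" if "a \<in> s" for a using kuhn_simplex.s_le_p[OF ks that] by blast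
  have bs: "b \<in> s" by (rule kuhn_simplex.base_in_s[OF ks])
  have bJ: "\<gamma> b \<in> J a" if a: "a \<in> s" for a
  proof -
    have "(\<Sum>i<m. \<bar>\<gamma> b i - \<gamma> a i\<bar>) \<le> (\<Sum>i<m. 1 / real p)"
    proof (rule sum_mono)
      fix i assume "i \<in> {..<m}"
      then have i: "i < m" by simp
      have "b i \<le> a i" "a i \<le> Suc (b i)"
        using kuhn_simplex.base_le[OF ks a] kuhn_simplex.le_Suc_base[OF ks a] by auto
      then have "\<bar>real (b i) - real (a i)\<bar> \<le> 1" by linarith
      then have "\<bar>real (b i) - real (a i)\<bar> / real p \<le> 1 / real p" using ppos by (simp add: divide_right_mono)
      then show "\<bar>\<gamma> b i - \<gamma> a i\<bar> \<le> 1 / real p" using i ppos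
        by (simp add: \<gamma>_def diff_divide_distrib[symmetric] abs_divide)
    qed
    also have "\<dots> = real m / real p" by simp
    also have "\<dots> < \<delta>" by (rule mp)
    finally show ?thesis using J[OF sp[OF a]] \<gamma>Q[OF sp[OF bs]] by blast
  qed
  have "{..m} = (reduced m \<circ> G) ` (J ` s)" using s(2) by (simp add: lab_def image_comp comp_def)
  then have "card {..m} \<le> card (J ` s)" by (metis card_image_le finite_imageI sfin)
  then have c1: "m + 1 \<le> card (J ` s)" by simp
  have "J ` s \<subseteq> {W\<in>\<W>. \<gamma> b \<in> W}" using J sp bJ by blast
  then have "card (J ` s) \<le> card {W\<in>\<W>. \<gamma> b \<in> W}" by (rule card_mono[rotated]) (use fin in simp)
  then show ?thesis using c1 \<gamma>Q[OF sp[OF bs]] by (meson order_trans)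
qed

lemma cont_into_free:
  assumes inV: "\<And>y. y \<in> topspace Y \<Longrightarrow> h y \<in> fv_space X"
    and loc: "\<And>p y0 e. admissible_seminorm X p \<Longrightarrow> y0 \<in> topspace Y \<Longrightarrow> e > 0 \<Longrightarrow>
               \<exists>W. openin Y W \<and> y0 \<in> W \<and> (\<forall>y\<in>W. p (\<lambda>z. h y z - h y0 z) < e)"
  shows "continuous_map Y (free_lcs X) h"
  unfolding continuous_map_def
proof (intro conjI allI impI)
  show "h \<in> topspace Y \<rightarrow> topspace (free_lcs X)" using inV by auto
  fix U assume U: "openin (free_lcs X) U"
  show "openin Y {x \<in> topspace Y. h x \<in> U}"
  proof (rule openin_subopen[THEN iffD2], intro ballI)
    fix y0 assume y0: "y0 \<in> {x \<in> topspace Y. h x \<in> U}"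
    obtain p e where p: "admissible_seminorm X p" "e > 0" "{g \<in> fv_space X. p (\<lambda>y. g y - h y0 y) < e} \<subseteq> U"
      using open_ball_inside[OF U, of "h y0"] y0 by blast
    obtain W where W: "openin Y W" "y0 \<in> W" "\<forall>y\<in>W. p (\<lambda>z. h y z - h y0 z) < e"
      using loc[OF p(1) _ p(2)] y0 by blast
    have "W \<subseteq> {x \<in> topspace Y. h x \<in> U}"
    proof
      fix y assume y: "y \<in> W"
      have yt: "y \<in> topspace Y" using W(1) y openin_subset by blast
      then have "h y \<in> {g \<in> fv_space X. p (\<lambda>z. g z - h y0 z) < e}" using inV W(3) y by blast
      then show "y \<in> {x \<in> topspace Y. h x \<in> U}" using p(3) yt by blast
    qed
    then show "\<exists>T. openin Y T \<and> y0 \<in> T \<and> T \<subseteq> {x \<in> topspace Y. h x \<in> U}" using W by blast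
  qed
qed

lemma dist_cont_PT:
  "continuous_map (powertop_real (UNIV::nat set)) euclideanreal (\<lambda>\<mu>. \<Sum>i<m. \<bar>\<mu> i - l i\<bar>)"
proof (intro continuous_map_sum)
  fix i :: nat
  have "continuous_map (powertop_real (UNIV::nat set)) euclideanreal (\<lambda>\<mu>. \<mu> i)"
    by (rule continuous_map_product_projection) simp
  then show "continuous_map (powertop_real UNIV) euclidean (\<lambda>\<mu>. \<bar>\<mu> i - l i\<bar>)"
    by (intro continuous_intros) auto
qed simp

lemma dir_1_3:
  assumes cr: "completely_regular_space X" and hd: "Hausdorff_space X"
    and H1: "\<forall>K. compactin (free_lcs X) K \<longrightarrow> finite_dimensional_space (subtopology (free_lcs X) K)"
  shows "\<forall>A. functionally_bounded X A \<longrightarrow> finite A"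
proof (intro allI impI, rule ccontr)
  fix A assume fbA: "functionally_bounded X A" and Ainf: "infinite A"
  obtain a :: "nat \<Rightarrow> 'a" where a: "inj a" "range a \<subseteq> A" using infinite_countable_subset[OF Ainf] by blast
  have AX: "A \<subseteq> topspace X" using fbA by (simp add: functionally_bounded_def)
  have aX: "a i \<in> topspace X" for i using a(2) AX by blast
  have aV: "fv_delta (a i) \<in> fv_space X" for i using fv_delta_in[OF aX] .
  have Mb: "\<exists>M>0. \<forall>i. p (fv_delta (a i)) \<le> M" if p: "admissible_seminorm X p" for p
  proof -
    obtain M where M: "M > 0" "\<And>x. x \<in> A \<Longrightarrow> \<bar>p (fv_delta x)\<bar> \<le> M"
      using fb_bound[OF fbA adm_delta_cont[OF p]] by blast
    have "\<forall>i. p (fv_delta (a i)) \<le> M" using M(2) a(2) by (meson abs_le_D1 range_subsetD)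
    then show ?thesis using M(1) by blast
  qed
  define cc where "cc = (\<lambda>m::nat. 1 / (real m + 1)^2)"
  have ccpos: "cc m > 0" for m by (simp add: cc_def)
  define Phi where "Phi = (\<lambda>m (l::nat \<Rightarrow> real). (\<lambda>y. \<Sum>i<m. (cc m * l i) * fv_delta (a i) y))"
  define Lam where "Lam = (\<lambda>m::nat. {l::nat \<Rightarrow> real. (\<forall>i<m. 0 \<le> l i \<and> l i \<le> 1) \<and> (\<forall>i. m \<le> i \<longrightarrow> l i = 0)})"
  define PT where "PT = powertop_real (UNIV::nat set)"
  have PhiV: "Phi m l \<in> fv_space X" for m l
    unfolding Phi_def by (intro fv_sum fv_scale aV) simp
  have Lam_cpt: "compactin PT (Lam m)" for m
  proof -
    have "Lam m = PiE UNIV (\<lambda>i. if i < m then {0..1} else {0})"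
      unfolding Lam_def by (auto simp: PiE_iff split: if_splits)
    moreover have "compactin PT (PiE UNIV (\<lambda>i. if i < m then {0..1::real} else {0}))"
      unfolding PT_def by (subst compactin_PiE) auto
    ultimately show ?thesis by simp
  qed
  have Phi_est: "p (\<lambda>y. Phi m \<mu> y - Phi m l y) \<le> cc m * M * (\<Sum>i<m. \<bar>\<mu> i - l i\<bar>)"
    if p: "admissible_seminorm X p" and M: "\<forall>i. p (fv_delta (a i)) \<le> M" for p M m \<mu> l
  proof -
    have sp: "seminorm_on (fv_space X) p" using admissible_sn[OF p] .
    have eq: "(\<lambda>y. Phi m \<mu> y - Phi m l y) = (\<lambda>y. \<Sum>i<m. (cc m * (\<mu> i - l i)) * fv_delta (a i) y)"
      unfolding Phi_def by (simp add: sum_subtractf[symmetric] algebra_simps)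
    have "p (\<lambda>y. Phi m \<mu> y - Phi m l y) \<le> (\<Sum>i<m. \<bar>cc m * (\<mu> i - l i)\<bar> * p (fv_delta (a i)))"
      unfolding eq by (rule sn_lincomb[OF sp]) (auto intro: aV)
    also have "\<dots> \<le> (\<Sum>i<m. cc m * \<bar>\<mu> i - l i\<bar> * M)"
    proof (rule sum_mono)
      fix i assume "i \<in> {..<m}"
      have "\<bar>cc m\<bar> = cc m" using ccpos[of m] by simp
      moreover have "cc m * \<bar>\<mu> i - l i\<bar> * p (fv_delta (a i)) \<le> cc m * \<bar>\<mu> i - l i\<bar> * M"
        using M ccpos[of m] by (intro mult_left_mono) auto
      ultimately show "\<bar>cc m * (\<mu> i - l i)\<bar> * p (fv_delta (a i)) \<le> cc m * \<bar>\<mu> i - l i\<bar> * M"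
        by (simp add: abs_mult)
    qed
    also have "\<dots> = cc m * M * (\<Sum>i<m. \<bar>\<mu> i - l i\<bar>)" by (simp add: sum_distrib_left algebra_simps)
    finally show ?thesis .
  qed
  have Phi0: "Phi m (\<lambda>i. 0) = (\<lambda>y. 0)" for m by (simp add: Phi_def)
  have Phi_cont: "continuous_map PT (free_lcs X) (Phi m)" for m
  proof (rule cont_into_free)
    show "Phi m y \<in> fv_space X" for y by (rule PhiV)
    fix p y0 e assume p: "admissible_seminorm X p" and e: "(e::real) > 0"
    obtain M where M: "M > 0" "\<forall>i. p (fv_delta (a i)) \<le> M" using Mb[OF p] by blast
    define r where "r = e / (cc m * M + 1)"
    have rpos: "r > 0" using e M ccpos[of m] by (simp add: r_def add_pos_nonneg)
    define W where "W = {\<mu> \<in> topspace PT. \<bar>(\<Sum>i<m. \<bar>\<mu> i - y0 i\<bar>) - 0\<bar> < r}"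
    have "openin PT W" unfolding W_def PT_def by (rule openin_real_pre[OF dist_cont_PT])
    moreover have "y0 \<in> topspace PT \<Longrightarrow> y0 \<in> W" using rpos by (simp add: W_def)
    moreover have "p (\<lambda>z. Phi m y z - Phi m y0 z) < e" if y: "y \<in> W" for y
    proof -
      have ds: "(\<Sum>i<m. \<bar>y i - y0 i\<bar>) < r" "0 \<le> (\<Sum>i<m. \<bar>y i - y0 i\<bar>)" using y by (auto simp: W_def sum_nonneg)
      have "p (\<lambda>z. Phi m y z - Phi m y0 z) \<le> cc m * M * (\<Sum>i<m. \<bar>y i - y0 i\<bar>)" by (rule Phi_est[OF p M(2)])
      also have "\<dots> \<le> cc m * M * r" using ds M(1) ccpos[of m] by (intro mult_left_mono) auto
      also have "\<dots> < e"
      proof -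
        have "cc m * M * r = e * (cc m * M / (cc m * M + 1))" unfolding r_def by (simp add: field_simps)
        also have "\<dots> < e * 1" using e M(1) ccpos[of m] by (intro mult_strict_left_mono) (auto simp: add_pos_nonneg)
        finally show ?thesis by simp
      qed
      finally show ?thesis .
    qed
    ultimately show "y0 \<in> topspace PT \<Longrightarrow> \<exists>W. openin PT W \<and> y0 \<in> W \<and> (\<forall>y\<in>W. p (\<lambda>z. Phi m y z - Phi m y0 z) < e)"
      by blast
  qed
  define C where "C = (\<lambda>m. Phi m ` Lam m)"
  have Ccpt: "compactin (free_lcs X) (C m)" for m
    unfolding C_def by (rule image_compactin[OF Lam_cpt Phi_cont])
  define K where "K = insert (\<lambda>y. 0) (\<Union>m. C m)"
  have KV: "K \<subseteq> fv_space X" using PhiV by (auto simp: K_def C_def)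
  have CK: "C m \<subseteq> K" for m by (auto simp: K_def)
  have Kcpt: "compactin (free_lcs X) K"
    unfolding compactin_def
  proof (intro conjI allI impI)
    show "K \<subseteq> topspace (free_lcs X)" using KV by simp
    fix \<U> assume U: "(\<forall>U\<in>\<U>. openin (free_lcs X) U) \<and> K \<subseteq> \<Union>\<U>"
    obtain U0 where U0: "U0 \<in> \<U>" "(\<lambda>y. 0) \<in> U0" using U by (auto simp: K_def)
    obtain p e where p: "admissible_seminorm X p" "e > 0" "{g \<in> fv_space X. p (\<lambda>y. g y - 0) < e} \<subseteq> U0"
      using open_ball_inside[of X U0 "\<lambda>y. 0"] U U0 by blast
    obtain M where M: "M > 0" "\<forall>i. p (fv_delta (a i)) \<le> M" using Mb[OF p(1)] by blast
    obtain N :: nat where N: "real N > M / e" using reals_Archimedean2 by blast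
    have big: "C m \<subseteq> U0" if m: "N \<le> m" for m
    proof
      fix g assume "g \<in> C m"
      then obtain l where l: "l \<in> Lam m" "g = Phi m l" by (auto simp: C_def)
      have "p (\<lambda>y. Phi m l y - Phi m (\<lambda>i. 0) y) \<le> cc m * M * (\<Sum>i<m. \<bar>l i - 0\<bar>)"
        by (rule Phi_est[OF p(1) M(2)])
      also have "\<dots> \<le> cc m * M * real m"
      proof -
        have "(\<Sum>i<m. \<bar>l i - 0\<bar>) \<le> (\<Sum>i<m. 1)" using l(1) by (intro sum_mono) (auto simp: Lam_def)
        then show ?thesis using M(1) ccpos[of m] by (intro mult_left_mono) auto
      qed
      also have "\<dots> \<le> M / (real m + 1)"
      proof -
        have "cc m * M * real m = M * (real m / (real m + 1)^2)" by (simp add: cc_def)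
        also have "\<dots> \<le> M * (1 / (real m + 1))"
        proof -
          have "real m / (real m + 1)^2 \<le> (real m + 1) / (real m + 1)^2"
            by (intro divide_right_mono) auto
          also have "\<dots> = 1 / (real m + 1)" by (simp add: power2_eq_square)
          finally show ?thesis using M(1) by (intro mult_left_mono) auto
        qed
        finally show ?thesis by simp
      qed
      also have "\<dots> < e"
      proof -
        have "M / e < real m + 1" using N m by linarith
        then show ?thesis using p(2) by (simp add: field_simps)
      qed
      finally have "p (\<lambda>y. g y - 0) < e" using l(2) Phi0 by simp
      then show "g \<in> U0" using p(3) PhiV l(2) by blast
    qed
    define K0 where "K0 = (\<Union>m<N. C m)"
    have "compactin (free_lcs X) K0" unfolding K0_def by (intro compactin_Union) (auto intro: Ccpt)
    moreover have "K0 \<subseteq> \<Union>\<U>" using U CK unfolding K0_def by blast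
    ultimately obtain \<F> where F: "finite \<F>" "\<F> \<subseteq> \<U>" "K0 \<subseteq> \<Union>\<F>"
      using U unfolding compactin_def by blast
    have "K \<subseteq> \<Union>(insert U0 \<F>)"
    proof
      fix g assume "g \<in> K"
      then consider "g = (\<lambda>y. 0)" | m where "g \<in> C m" by (auto simp: K_def)
      then show "g \<in> \<Union>(insert U0 \<F>)"
      proof cases
        case 1 then show ?thesis using U0 by blast
      next
        case (2 m)
        show ?thesis
        proof (cases "m < N")
          case True then show ?thesis using 2 F(3) unfolding K0_def by blast
        next
          case False then show ?thesis using 2 big[of m] by auto
        qed
      qed
    qed
    then show "\<exists>\<F>. finite \<F> \<and> \<F> \<subseteq> \<U> \<and> K \<subseteq> \<Union>\<F>"
      using F U0 by (intro exI[of _ "insert U0 \<F>"]) auto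
  qed
  define T where "T = subtopology (free_lcs X) K"
  have topT: "topspace T = K" using KV by (auto simp: T_def)
  obtain n where n: "covering_dim_le T n"
    using H1 Kcpt unfolding T_def finite_dimensional_space_def by blast
  define m where "m = n + 2"
  define cm where "cm = cc m"
  have cmpos: "cm > 0" using ccpos[of m] by (simp add: cm_def)
  define psi where "psi = (\<lambda>i. SOME \<phi>. continuous_map X euclideanreal \<phi> \<and> \<phi> (a i) = 1 \<and> (\<forall>y\<in>a ` ({..<m} - {i}). \<phi> y = 0))"
  have psi: "continuous_map X euclideanreal (psi i) \<and> psi i (a i) = 1 \<and> (\<forall>y\<in>a ` ({..<m} - {i}). psi i y = 0)" for i
  proof -
    have "a i \<notin> a ` ({..<m} - {i})" using a(1) by (auto simp: inj_def)
    then obtain \<phi> where "continuous_map X euclideanreal \<phi>" "\<phi> (a i) = 1" "\<And>y. y \<in> a ` ({..<m} - {i}) \<Longrightarrow> \<phi> y = 0"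
      using sep_fun[OF cr hd, of "a ` ({..<m} - {i})" "a i"] aX by blast
    then have "\<exists>\<phi>. continuous_map X euclideanreal \<phi> \<and> \<phi> (a i) = 1 \<and> (\<forall>y\<in>a ` ({..<m} - {i}). \<phi> y = 0)" by blast
    then show ?thesis unfolding psi_def by (rule someI_ex)
  qed
  have pairPhi: "pair (Phi m l) (psi i) = cm * l i" if i: "i < m" for l i
  proof -
    have "pair (Phi m l) (psi i) = (\<Sum>j<m. pair (\<lambda>y. (cc m * l j) * fv_delta (a j) y) (psi i))"
      unfolding Phi_def by (rule pair_sum) (auto intro: fv_scale aV)
    also have "\<dots> = (\<Sum>j<m. (cc m * l j) * psi i (a j))" by (simp add: pair_scale pair_delta)
    also have "\<dots> = (cc m * l i) * psi i (a i) + (\<Sum>j\<in>{..<m} - {i}. (cc m * l j) * psi i (a j))"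
      using i by (simp add: sum.remove)
    also have "(\<Sum>j\<in>{..<m} - {i}. (cc m * l j) * psi i (a j)) = 0"
      using psi[of i] by (intro sum.neutral) auto
    finally show ?thesis using psi[of i] by (simp add: cm_def)
  qed
  have pc: "continuous_map T euclideanreal (\<lambda>h. pair h (psi i))" for i
    unfolding T_def by (rule continuous_map_from_subtopology[OF pair_cont]) (use psi in blast)
  define Sg where "Sg = PiE {..<m} (\<lambda>_. {False, True})"
  define Uo where "Uo = (\<lambda>(\<sigma>::nat \<Rightarrow> bool) (i::nat). if \<sigma> i then {cm/3<..} else {..<2*cm/3::real})"
  define Us where "Us = (\<lambda>\<sigma>. {h \<in> topspace T. \<forall>i\<in>{..<m}. (\<lambda>h. pair h (psi i)) h \<in> Uo \<sigma> i})"
  define \<U> where "\<U> = Us ` Sg"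
  have Ufin: "finite \<U>" unfolding \<U>_def Sg_def by (intro finite_imageI finite_PiE) auto
  have Uopen: "openin T U" if UU: "U \<in> \<U>" for U
  proof -
    obtain \<sigma> where "U = Us \<sigma>" using UU by (auto simp: \<U>_def)
    moreover have "openin T (Us \<sigma>)" unfolding Us_def
      by (rule open_conj) (auto intro: pc simp: Uo_def)
    ultimately show ?thesis by simp
  qed
  have Ucov: "\<Union>\<U> = topspace T"
  proof
    show "\<Union>\<U> \<subseteq> topspace T" by (auto simp: \<U>_def Us_def)
    show "topspace T \<subseteq> \<Union>\<U>"
    proof
      fix h assume h: "h \<in> topspace T"
      define \<sigma> where "\<sigma> = restrict (\<lambda>i. pair h (psi i) > cm/3) {..<m}"
      have "\<sigma> \<in> Sg" by (simp add: \<sigma>_def Sg_def)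
      moreover have "h \<in> Us \<sigma>" using h cmpos by (auto simp: Us_def Uo_def \<sigma>_def)
      ultimately show "h \<in> \<Union>\<U>" by (auto simp: \<U>_def)
    qed
  qed
  have Uprem: "finite \<U> \<and> (\<forall>U\<in>\<U>. openin T U) \<and> \<Union>\<U> = topspace T" using Ufin Uopen Ucov by blast
  have nall: "\<forall>\<U>'. finite \<U>' \<and> (\<forall>U\<in>\<U>'. openin T U) \<and> \<Union>\<U>' = topspace T \<longrightarrow>
      (\<exists>\<V>. finite \<V> \<and> (\<forall>V\<in>\<V>. openin T V) \<and> \<Union>\<V> = topspace T \<and>
           (\<forall>V\<in>\<V>. \<exists>U\<in>\<U>'. V \<subseteq> U) \<and> (\<forall>x\<in>topspace T. card {V\<in>\<V>. x \<in> V} \<le> n + 1))"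
    using n by (simp only: covering_dim_le_def)
  have "\<exists>\<V>. finite \<V> \<and> (\<forall>V\<in>\<V>. openin T V) \<and> \<Union>\<V> = topspace T \<and>
           (\<forall>V\<in>\<V>. \<exists>U\<in>\<U>. V \<subseteq> U) \<and> (\<forall>x\<in>topspace T. card {V\<in>\<V>. x \<in> V} \<le> n + 1)"
    using spec[OF nall, of \<U>] Uprem by (rule mp)
  then obtain \<V> where V: "finite \<V>" "\<forall>V\<in>\<V>. openin T V" "\<Union>\<V> = topspace T" "\<forall>V\<in>\<V>. \<exists>U\<in>\<U>. V \<subseteq> U"
    "\<forall>x\<in>topspace T. card {V\<in>\<V>. x \<in> V} \<le> n + 1"
    by (elim exE conjE) blast
  define Wf where "Wf = (\<lambda>V. {l \<in> Lam m. Phi m l \<in> V})"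
  define \<W> where "\<W> = Wf ` \<V>"
  have Wfin: "finite \<W>" unfolding \<W>_def using V(1) by simp
  define d where "d = (\<lambda>(l::nat \<Rightarrow> real) \<mu>. \<Sum>i<m. \<bar>\<mu> i - l i\<bar>)"
  have loc: "\<exists>W\<in>\<W>. \<exists>r>0. \<forall>\<mu>\<in>Lam m. d l \<mu> < r \<longrightarrow> \<mu> \<in> W" if l: "l \<in> Lam m" for l
  proof -
    have "Phi m l \<in> K" using l CK by (auto simp: C_def)
    then obtain V where Vv: "V \<in> \<V>" "Phi m l \<in> V" using V(3) topT by blast
    have "openin T V" using V(2) Vv(1) by blast
    then obtain Ob where Ob: "openin (free_lcs X) Ob" "V = Ob \<inter> K" unfolding T_def openin_subtopology by blast
    obtain p e where p: "admissible_seminorm X p" "e > 0" "{g \<in> fv_space X. p (\<lambda>y. g y - Phi m l y) < e} \<subseteq> Ob"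
      using open_ball_inside[OF Ob(1), of "Phi m l"] Vv Ob(2) by blast
    obtain M where M: "M > 0" "\<forall>i. p (fv_delta (a i)) \<le> M" using Mb[OF p(1)] by blast
    define r where "r = e / (cc m * M + 1)"
    have rpos: "r > 0" using p(2) M ccpos[of m] by (simp add: r_def add_pos_nonneg)
    have "\<forall>\<mu>\<in>Lam m. d l \<mu> < r \<longrightarrow> \<mu> \<in> Wf V"
    proof (intro ballI impI)
      fix \<mu> assume \<mu>: "\<mu> \<in> Lam m" "d l \<mu> < r"
      have dnn: "0 \<le> d l \<mu>" by (simp add: d_def sum_nonneg)
      have "p (\<lambda>z. Phi m \<mu> z - Phi m l z) \<le> cc m * M * d l \<mu>" unfolding d_def by (rule Phi_est[OF p(1) M(2)])
      also have "\<dots> \<le> cc m * M * r" using \<mu>(2) M(1) ccpos[of m] by (intro mult_left_mono) auto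
      also have "\<dots> < e"
      proof -
        have "cc m * M * r = e * (cc m * M / (cc m * M + 1))" unfolding r_def by (simp add: field_simps)
        also have "\<dots> < e * 1" using p(2) M(1) ccpos[of m] by (intro mult_strict_left_mono) (auto simp: add_pos_nonneg)
        finally show ?thesis by simp
      qed
      finally have "Phi m \<mu> \<in> Ob" using p(3) PhiV by blast
      moreover have "Phi m \<mu> \<in> K" using \<mu>(1) CK by (auto simp: C_def)
      ultimately show "\<mu> \<in> Wf V" using Ob(2) \<mu>(1) by (simp add: Wf_def)
    qed
    then show ?thesis using rpos Vv(1) unfolding \<W>_def by blast
  qed
  have dc: "continuous_map PT euclideanreal (d l)" for l unfolding PT_def d_def by (rule dist_cont_PT)
  have dtri: "d a' c \<le> d a' b + d b c" for a' b c
  proof -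
    have "d a' c \<le> (\<Sum>i<m. \<bar>b i - a' i\<bar> + \<bar>c i - b i\<bar>)" unfolding d_def by (rule sum_mono) linarith
    then show ?thesis by (simp add: d_def sum.distrib)
  qed
  have dsym: "d a' b = d b a'" for a' b unfolding d_def by (simp add: abs_minus_commute)
  have drefl: "d a' a' = 0" for a' unfolding d_def by simp
  obtain \<delta> where \<delta>: "\<delta> > 0" "\<forall>l\<in>Lam m. \<exists>W\<in>\<W>. \<forall>\<mu>\<in>Lam m. d l \<mu> < \<delta> \<longrightarrow> \<mu> \<in> W"
    using lebesgue_gen[OF Lam_cpt dc dtri dsym drefl loc] by blast
  have faces: "False" if W: "W \<in> \<W>" "i < m" "\<exists>l\<in>W. l i = 0" "\<exists>l\<in>W. l i = 1" for W i
  proof -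
    obtain V where Vv: "V \<in> \<V>" "W = Wf V" using W(1) by (auto simp: \<W>_def)
    obtain U where U: "U \<in> \<U>" "V \<subseteq> U" using V(4) Vv(1) by blast
    obtain \<sigma> where \<sigma>: "U = Us \<sigma>" using U(1) by (auto simp: \<U>_def)
    obtain l0 where l0: "l0 \<in> W" "l0 i = 0" using W(3) by blast
    obtain l1 where l1: "l1 \<in> W" "l1 i = 1" using W(4) by blast
    have "Phi m l0 \<in> Us \<sigma>" "Phi m l1 \<in> Us \<sigma>" using l0(1) l1(1) Vv(2) U(2) \<sigma> by (auto simp: Wf_def)
    then have "pair (Phi m l0) (psi i) \<in> Uo \<sigma> i" "pair (Phi m l1) (psi i) \<in> Uo \<sigma> i"
      using W(2) by (auto simp: Us_def)
    then have "0 \<in> Uo \<sigma> i" "cm \<in> Uo \<sigma> i" using pairPhi[OF W(2)] l0(2) l1(2) by auto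
    then show False using cmpos by (auto simp: Uo_def split: if_splits)
  qed
  have LamQ: "Lam m = {l. (\<forall>i<m. 0 \<le> l i \<and> l i \<le> 1) \<and> (\<forall>i. m \<le> i \<longrightarrow> l i = 0)}" by (simp add: Lam_def)
  obtain l where l: "l \<in> Lam m" "m + 1 \<le> card {W\<in>\<W>. l \<in> W}"
    using kuhn_cover[OF LamQ Wfin \<delta>(1)] \<delta>(2) faces unfolding d_def by blast
  have PhiK: "Phi m l \<in> topspace T" using l(1) CK topT by (auto simp: C_def)
  have "{W\<in>\<W>. l \<in> W} \<subseteq> Wf ` {V\<in>\<V>. Phi m l \<in> V}" by (auto simp: \<W>_def Wf_def)
  then have "card {W\<in>\<W>. l \<in> W} \<le> card (Wf ` {V\<in>\<V>. Phi m l \<in> V})"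
    by (rule card_mono[rotated]) (use V(1) in simp)
  also have "\<dots> \<le> card {V\<in>\<V>. Phi m l \<in> V}" by (rule card_image_le) (use V(1) in simp)
  also have "\<dots> \<le> n + 1" using V(5) PhiK by blast
  finally show False using l(2) by (simp add: m_def)
qed

theorem proposition2p2:
  fixes X :: "'a topology"
  assumes "completely_regular_space X" and "Hausdorff_space X"
  shows "((\<forall>K. compactin (free_lcs X) K \<longrightarrow>
              finite_dimensional_space (subtopology (free_lcs X) K))
          \<longleftrightarrow> (\<forall>B. B \<subseteq> topspace (free_lcs X) \<and> tvs_bounded (free_lcs X) B \<and> lin_indep B
                   \<longrightarrow> finite B))
       \<and> ((\<forall>B. B \<subseteq> topspace (free_lcs X) \<and> tvs_bounded (free_lcs X) B \<and> lin_indep B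
                   \<longrightarrow> finite B)
          \<longleftrightarrow> (\<forall>B. functionally_bounded X B \<longrightarrow> finite B))"
proof -
  let ?P1 = "\<forall>K. compactin (free_lcs X) K \<longrightarrow> finite_dimensional_space (subtopology (free_lcs X) K)"
  let ?P2 = "\<forall>B. B \<subseteq> topspace (free_lcs X) \<and> tvs_bounded (free_lcs X) B \<and> lin_indep B \<longrightarrow> finite B"
  let ?P3 = "\<forall>B. functionally_bounded X B \<longrightarrow> finite B"
  have a: "?P2 \<Longrightarrow> ?P3" by (rule dir_2_3)
  have b: "?P3 \<Longrightarrow> ?P2" by (rule dir_3_2[OF assms])
  have c: "?P3 \<Longrightarrow> ?P1" by (rule dir_3_1[OF assms])
  have d: "?P1 \<Longrightarrow> ?P3" by (rule dir_1_3[OF assms])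
  have e1: "?P1 \<longleftrightarrow> ?P2" using a b c d by blast
  have e2: "?P2 \<longleftrightarrow> ?P3" using a b by blast
  show ?thesis using e1 e2 by (rule conjI)
qed

end
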